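(* Let $A$ be a connectivity class of external positions of the $n$-dimensional puzzle with edge $k$ which is not its frame class, and let $p_1,p_2,p_3$ be three distinct positions in $A$. Then there exist a combination $g$ and a 3-dimensional layer $L=\{p\in M^n: p_l=c_l\ \text{for } l\notin I\}$ (with $I\subseteq\{1,\dots,n\}$, $|I|=3$, $c_l\in M$) such that $g(p_r)\in L$ for $r=1,2,3$, and the restrictions $g(p_1)|_I,g(p_2)|_I,g(p_3)|_I\in M^3$ all lie in one and the same connectivity class of the 3-dimensional puzzle with edge $k$, this class not being the frame class of the 3-dimensional puzzle.
   Context: Fix integers $k\ge2$, $n\ge3$, $M=\{0,\dots,k-1\}$. For any dimension $d\ge3$ the $d$-dimensional puzzle with edge $k$ has positions $p\in M^d$; $B(p)=\{i:p_i\in\{0,k-1\}\}$, $p$ external if $B(p)\ne\emptyset$. For distinct $i,j$, $\psi_{i,j}:M^d\to M^d$ is $(\psi_{i,j}p)_i=k-1-p_j$, $(\psi_{i,j}p)_j=p_i$, other coordinates unchanged. A move is given by distinct $i,j$ and constants $c_l\in M$ ($l\notin\{i,j\}$) and applies $\psi_{i,j}$ to all positions $p$ with $p_l=c_l$ ($l\notin\{i,j\}$), fixing the others; a combination is a finite sequence of moves (composite permutation of $M^d$). Connectivity classes are orbits of external positions under combinations. For odd $k$ the frame class is the set of positions with exactly one coordinate in $\{0,k-1\}$ and all others equal to $(k-1)/2$; for even $k$ there is none. For $I=\{i_1<i_2<i_3\}$, $p|_I=(p_{i_1},p_{i_2},p_{i_3})\in M^3$. *)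

theory Defs
  imports Main
begin

text \<open>Positions of the d-dimensional puzzle with edge k: coordinates are indexed
by 0..d-1 (instead of 1..d); a position is a function nat => nat with values
< k on {..<d} and canonically 0 outside.\<close>

definition pos :: "nat \<Rightarrow> nat \<Rightarrow> (nat \<Rightarrow> nat) set" where
  "pos k d = {p. (\<forall>i<d. p i < k) \<and> (\<forall>i. d \<le> i \<longrightarrow> p i = 0)}"

definition external :: "nat \<Rightarrow> nat \<Rightarrow> (nat \<Rightarrow> nat) \<Rightarrow> bool" where
  "external k d p \<longleftrightarrow> p \<in> pos k d \<and> (\<exists>i<d. p i = 0 \<or> p i = k - 1)"

definition psi :: "nat \<Rightarrow> nat \<Rightarrow> nat \<Rightarrow> (nat \<Rightarrow> nat) \<Rightarrow> (nat \<Rightarrow> nat)" where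
  "psi k i j p = p(i := k - 1 - p j, j := p i)"

definition move :: "nat \<Rightarrow> nat \<Rightarrow> nat \<Rightarrow> nat \<Rightarrow> (nat \<Rightarrow> nat) \<Rightarrow> (nat \<Rightarrow> nat) \<Rightarrow> (nat \<Rightarrow> nat)" where
  "move k d i j c p =
     (if p \<in> pos k d \<and> (\<forall>l<d. l \<noteq> i \<and> l \<noteq> j \<longrightarrow> p l = c l) then psi k i j p else p)"

definition is_move :: "nat \<Rightarrow> nat \<Rightarrow> ((nat \<Rightarrow> nat) \<Rightarrow> (nat \<Rightarrow> nat)) \<Rightarrow> bool" where
  "is_move k d m \<longleftrightarrow> (\<exists>i j c. i < d \<and> j < d \<and> i \<noteq> j \<and>
      (\<forall>l<d. l \<noteq> i \<and> l \<noteq> j \<longrightarrow> c l < k) \<and> m = move k d i j c)"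

inductive_set comb :: "nat \<Rightarrow> nat \<Rightarrow> ((nat \<Rightarrow> nat) \<Rightarrow> (nat \<Rightarrow> nat)) set"
  for k d where
  comb_id: "id \<in> comb k d"
| comb_step: "g \<in> comb k d \<Longrightarrow> is_move k d m \<Longrightarrow> m \<circ> g \<in> comb k d"

definition conn_class :: "nat \<Rightarrow> nat \<Rightarrow> (nat \<Rightarrow> nat) set \<Rightarrow> bool" where
  "conn_class k d A \<longleftrightarrow> (\<exists>p. external k d p \<and> A = {g p | g. g \<in> comb k d})"

definition frame_class :: "nat \<Rightarrow> nat \<Rightarrow> (nat \<Rightarrow> nat) set" where
  "frame_class k d =
    (if odd k then {p \<in> pos k d. \<exists>i<d. (p i = 0 \<or> p i = k - 1) \<and>
                     (\<forall>j<d. j \<noteq> i \<longrightarrow> p j = (k - 1) div 2)}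
     else {})"

definition restr :: "nat set \<Rightarrow> (nat \<Rightarrow> nat) \<Rightarrow> (nat \<Rightarrow> nat)" where
  "restr I p = (\<lambda>t. if t < 3 then p (sorted_list_of_set I ! t) else 0)"

end

theory Submission
  imports Defs "HOL-Library.Multiset" "HOL-Combinatorics.Permutations"
begin


definition dl :: "nat \<Rightarrow> nat \<Rightarrow> nat" where "dl k x = min x (k - 1 - x)"
definition cen :: "nat \<Rightarrow> nat \<Rightarrow> bool" where "cen k x \<longleftrightarrow> 2*x+1 = k"
definition MS :: "nat \<Rightarrow> nat \<Rightarrow> (nat \<Rightarrow> nat) \<Rightarrow> nat multiset" where
  "MS k n y = mset (map (\<lambda>i. dl k (y i)) [0..<n])"
definition reach :: "nat \<Rightarrow> nat \<Rightarrow> (nat \<Rightarrow> nat) \<Rightarrow> (nat \<Rightarrow> nat) \<Rightarrow> bool" where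
  "reach k d p q \<longleftrightarrow> (\<exists>g\<in>comb k d. g p = q)"

lemma comb_comp: "h \<in> comb k d \<Longrightarrow> g \<in> comb k d \<Longrightarrow> h \<circ> g \<in> comb k d"
proof (induction h rule: comb.induct)
  case comb_id then show ?case by simp
next
  case (comb_step h m)
  have "m \<circ> (h \<circ> g) \<in> comb k d" using comb.comb_step[OF comb_step.IH[OF comb_step.prems] comb_step.hyps(2)] .
  then show ?case by (simp add: comp_assoc comp_def)
qed

lemma psi_pos: "p \<in> pos k d \<Longrightarrow> i < d \<Longrightarrow> j < d \<Longrightarrow> psi k i j p \<in> pos k d"
  unfolding pos_def psi_def by auto

lemma move_pos: "is_move k d m \<Longrightarrow> p \<in> pos k d \<Longrightarrow> m p \<in> pos k d"
  unfolding is_move_def move_def using psi_pos by auto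

lemma comb_pos: "g \<in> comb k d \<Longrightarrow> p \<in> pos k d \<Longrightarrow> g p \<in> pos k d"
  by (induction g rule: comb.induct) (auto simp: move_pos)

lemma move_cases: "is_move k d m \<Longrightarrow> p \<in> pos k d \<Longrightarrow>
   m p = p \<or> (\<exists>i j. i < d \<and> j < d \<and> i \<noteq> j \<and> m p = psi k i j p)"
proof -
  assume "is_move k d m" "p \<in> pos k d"
  then obtain i j c where "i < d" "j < d" "i \<noteq> j" "m = move k d i j c" unfolding is_move_def by blast
  then show ?thesis unfolding move_def using \<open>p \<in> pos k d\<close> by auto
qed

lemma comb_inv:
  assumes "g \<in> comb k d" "p \<in> pos k d" "P p"
    and "\<And>q i j. q \<in> pos k d \<Longrightarrow> P q \<Longrightarrow> i < d \<Longrightarrow> j < d \<Longrightarrow> i \<noteq> j \<Longrightarrow> P (psi k i j q)"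
  shows "P (g p)"
  using assms(1)
proof (induction g rule: comb.induct)
  case comb_id then show ?case using assms by simp
next
  case (comb_step g m)
  have "g p \<in> pos k d" using comb_step(1) assms(2) comb_pos by blast
  then show ?case using move_cases[OF comb_step(2), of "g p"] comb_step(3) assms(4) by auto
qed

lemma move_at:
  assumes "p \<in> pos k d" "i < d" "j < d" "i \<noteq> j"
  shows "is_move k d (move k d i j p)" "move k d i j p p = psi k i j p"
proof -
  show "is_move k d (move k d i j p)" unfolding is_move_def
    using assms by (intro exI[of _ i] exI[of _ j] exI[of _ p]) (auto simp: pos_def)
  show "move k d i j p p = psi k i j p" using assms unfolding move_def by auto
qed

lemma move_off:
  assumes "l < d" "l \<noteq> i" "l \<noteq> j" "f l \<noteq> p l"
  shows "move k d i j p f = f"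
  using assms unfolding move_def by auto

lemma reach_refl: "reach k d p p"
  unfolding reach_def using comb.comb_id by (intro bexI[of _ id]) auto

lemma reach_trans: "reach k d p q \<Longrightarrow> reach k d q r \<Longrightarrow> reach k d p r"
  unfolding reach_def using comb_comp by (metis comp_apply)

lemma reach_psi: "p \<in> pos k d \<Longrightarrow> i < d \<Longrightarrow> j < d \<Longrightarrow> i \<noteq> j \<Longrightarrow> reach k d p (psi k i j p)"
  unfolding reach_def using move_at comb.comb_step[OF comb.comb_id] by (metis comp_id)

lemma reach_pos: "reach k d p q \<Longrightarrow> p \<in> pos k d \<Longrightarrow> q \<in> pos k d"
  unfolding reach_def using comb_pos by blast

lemma dl_flip: "x < k \<Longrightarrow> dl k (k - Suc x) = dl k x"
  unfolding dl_def by auto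

lemma dl_eq: "x < k \<Longrightarrow> y < k \<Longrightarrow> dl k x = dl k y \<Longrightarrow> x = y \<or> x = k - 1 - y"
  unfolding dl_def by (auto simp: min_def split: if_splits)

lemma cen_dl: "x < k \<Longrightarrow> cen k (dl k x) \<longleftrightarrow> cen k x"
  unfolding dl_def cen_def by (auto simp: min_def)

lemma cen_flip: "x < k \<Longrightarrow> cen k (k - Suc x) \<longleftrightarrow> cen k x"
  unfolding cen_def by auto

lemma flip_neq: "x < k \<Longrightarrow> \<not> cen k x \<Longrightarrow> k - 1 - x \<noteq> x"
  unfolding cen_def by auto

lemma MS_psi:
  assumes "p \<in> pos k n" "i < n" "j < n"
  shows "MS k n (psi k i j p) = MS k n p"
proof -
  let ?ls = "map (\<lambda>l. dl k (p l)) [0..<n]"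
  have "map (\<lambda>l. dl k (psi k i j p l)) [0..<n] = ?ls[j := ?ls ! i, i := ?ls ! j]"
    using assms by (intro nth_equalityI) (auto simp: psi_def nth_list_update dl_flip[of "p _" k] pos_def)
  then show ?thesis unfolding MS_def using mset_swap[of i ?ls j] assms by simp
qed

lemma MS_comb: "g \<in> comb k n \<Longrightarrow> p \<in> pos k n \<Longrightarrow> MS k n (g p) = MS k n p"
  using comb_inv[of g k n p "\<lambda>q. MS k n q = MS k n p"] MS_psi by auto

lemma MS_reach: "reach k n p q \<Longrightarrow> p \<in> pos k n \<Longrightarrow> MS k n q = MS k n p"
  unfolding reach_def using MS_comb by blast



definition sreach where
  "sreach k n f1 f2 y y' \<longleftrightarrow> (\<exists>g\<in>comb k n. g y = y' \<and> g f1 = f1 \<and> g f2 = f2)"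

lemma sreach_refl: "sreach k n f1 f2 y y"
  unfolding sreach_def using comb.comb_id by (intro bexI[of _ id]) auto

lemma sreach_trans: "sreach k n f1 f2 x y \<Longrightarrow> sreach k n f1 f2 y z \<Longrightarrow> sreach k n f1 f2 x z"
  unfolding sreach_def using comb_comp by (metis comp_apply)

lemma sreach_reach: "sreach k n f1 f2 x y \<Longrightarrow> reach k n x y"
  unfolding sreach_def reach_def by blast

lemma sreach_psi:
  assumes "y \<in> pos k n" "i < n" "j < n" "i \<noteq> j"
    and "\<exists>l<n. l \<noteq> i \<and> l \<noteq> j \<and> f1 l \<noteq> y l"
    and "\<exists>l<n. l \<noteq> i \<and> l \<noteq> j \<and> f2 l \<noteq> y l"
  shows "sreach k n f1 f2 y (psi k i j y)"
proof -
  have "move k n i j y \<circ> id \<in> comb k n" using move_at(1)[OF assms(1-4)] comb.comb_step[OF comb.comb_id] by blast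
  moreover have "move k n i j y f1 = f1" "move k n i j y f2 = f2" using assms(5,6) move_off by metis+
  ultimately show ?thesis unfolding sreach_def using move_at(2)[OF assms(1-4)] by (intro bexI[of _ "move k n i j y \<circ> id"]) auto
qed

lemma three_pick: "x \<noteq> y \<Longrightarrow> y \<noteq> z \<Longrightarrow> x \<noteq> z \<Longrightarrow> \<exists>r\<in>{x,y,z}. r \<noteq> F1 \<and> r \<noteq> F2"
proof -
  assume a: "x \<noteq> y" "y \<noteq> z" "x \<noteq> z"
  show ?thesis
  proof (cases "x \<noteq> F1 \<and> x \<noteq> F2")
    case True then show ?thesis by blast
  next
    case F: False
    show ?thesis
    proof (cases "y \<noteq> F1 \<and> y \<noteq> F2")
      case True then show ?thesis by blast
    next
      case False then have "z \<noteq> F1 \<and> z \<noteq> F2" using F a by metis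
      then show ?thesis by blast
    qed
  qed
qed

lemma three_pairs:
  fixes a b k :: nat
  assumes "a < k" "b < k" "\<not> (2*a+1 = k \<and> 2*b+1 = k)"
  shows "\<exists>r\<in>{(a,b), (k-1-b, a), (k-1-a, k-1-b)}. r \<noteq> F1 \<and> r \<noteq> F2"
proof -
  have "(a,b) \<noteq> (k-1-b, a)" "(k-1-b, a) \<noteq> (k-1-a, k-1-b)" "(a,b) \<noteq> (k-1-a, k-1-b)"
    using assms by (simp_all, linarith+)
  then show ?thesis by (rule three_pick)
qed

lemma upt_split: "i \<le> j \<Longrightarrow> j \<le> m \<Longrightarrow> [i..<m] = [i..<j] @ [j..<m]"
  by (metis le_add_diff_inverse upt_add_eq_append)

context
  fixes k n :: nat and X f1 f2 :: "nat \<Rightarrow> nat"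
  assumes k2: "2 \<le> k" and n3: "3 \<le> n" and Xpos: "X \<in> pos k n"
    and X0: "dl k (X 0) = 0" and X1: "\<not> cen k (X 1)"
    and f1pos: "f1 \<in> pos k n" and f2pos: "f2 \<in> pos k n"
    and fX: "\<And>l. 3 \<le> l \<Longrightarrow> l < n \<Longrightarrow> f1 l = X l \<and> f2 l = X l"
begin

lemma prerot:
  assumes ypos: "y \<in> pos k n" and l: "3 \<le> l" "l < n" "y l \<noteq> X l"
    and i: "i < 3" "i' < 3" "i \<noteq> i'" and nc: "\<not> (cen k (y i) \<and> cen k (y i'))"
  shows "\<exists>y'. sreach k n f1 f2 y y' \<and> (\<forall>j. j \<noteq> i \<and> j \<noteq> i' \<longrightarrow> y' j = y j) \<and>
     (f1 i \<noteq> y' i \<or> f1 i' \<noteq> y' i') \<and> (f2 i \<noteq> y' i \<or> f2 i' \<noteq> y' i')"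
proof -
  define r1 where "r1 = psi k i i' y"
  define r2 where "r2 = psi k i i' r1"
  have in3: "i < n" "i' < n" using i n3 by auto
  have li: "l \<noteq> i" "l \<noteq> i'" using i l by auto
  have fl: "f1 l \<noteq> y l" "f2 l \<noteq> y l" using fX[OF l(1,2)] l(3) by auto
  have s1: "sreach k n f1 f2 y r1" unfolding r1_def
    using sreach_psi[OF ypos in3 i(3)] l li fl by blast
  have r1pos: "r1 \<in> pos k n" unfolding r1_def using psi_pos ypos in3 by blast
  have r1l: "r1 l = y l" unfolding r1_def psi_def using li by simp
  have s2: "sreach k n f1 f2 r1 r2" unfolding r2_def
    using sreach_psi[OF r1pos in3 i(3)] l li fl r1l by metis
  have yik: "y i < k" "y i' < k" using ypos in3 unfolding pos_def by auto
  have nc': "\<not> (2 * y i + 1 = k \<and> 2 * y i' + 1 = k)" using nc unfolding cen_def .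
  have v1: "r1 i = k - 1 - y i'" "r1 i' = y i" unfolding r1_def psi_def using i by auto
  have v2: "r2 i = k - 1 - y i" "r2 i' = k - 1 - y i'" unfolding r2_def psi_def using i v1 by auto
  have o1: "\<forall>j. j \<noteq> i \<and> j \<noteq> i' \<longrightarrow> r1 j = y j" unfolding r1_def psi_def by auto
  have o2: "\<forall>j. j \<noteq> i \<and> j \<noteq> i' \<longrightarrow> r2 j = y j" unfolding r2_def psi_def using o1 by auto
  obtain r where r: "r\<in>{(y i, y i'), (k-1-y i', y i), (k-1-y i, k-1-y i')}"
     "r \<noteq> (f1 i, f1 i')" "r \<noteq> (f2 i, f2 i')"
    using three_pairs[OF yik nc'] by blast
  show ?thesis
  proof (cases "r = (y i, y i')")
    case True then show ?thesis using r sreach_refl by (intro exI[of _ y]) auto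
  next
    case False
    show ?thesis
    proof (cases "r = (k-1-y i', y i)")
      case True then show ?thesis using r s1 o1 v1 by (intro exI[of _ r1]) auto
    next
      case False
      then have "r = (k-1-y i, k-1-y i')" using r(1) \<open>r \<noteq> (y i, y i')\<close> by auto
      moreover have "sreach k n f1 f2 y r2" using s1 s2 sreach_trans by blast
      ultimately show ?thesis using r o2 v2 by (intro exI[of _ r2]) (simp, metis)
    qed
  qed
qed


lemma Xk: "\<And>j. j < n \<Longrightarrow> X j < k" using Xpos unfolding pos_def by auto

lemma find_val:
  assumes ypos: "y \<in> pos k n" and ms: "MS k n y = MS k n X" and l: "3 \<le> l" "l < n"
    and mt: "\<forall>j. 3 \<le> j \<and> j < l \<longrightarrow> y j = X j"
  shows "\<exists>a. (a < 3 \<or> (l \<le> a \<and> a < n)) \<and> dl k (y a) = dl k (X l)"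
proof -
  have sp: "[0..<n] = [0..<3] @ [3..<l] @ [l..<n]" using upt_split[of 0 3 n] upt_split[of 3 l n] l by simp
  have mid: "map (\<lambda>i. dl k (y i)) [3..<l] = map (\<lambda>i. dl k (X i)) [3..<l]" using mt by auto
  have "mset (map (\<lambda>i. dl k (y i)) ([0..<3] @ [l..<n])) = mset (map (\<lambda>i. dl k (X i)) ([0..<3] @ [l..<n]))"
    using ms unfolding MS_def sp by (simp add: mid)
  moreover have "dl k (X l) \<in> set (map (\<lambda>i. dl k (X i)) ([0..<3] @ [l..<n]))" using l by auto
  ultimately have "dl k (X l) \<in> set (map (\<lambda>i. dl k (y i)) ([0..<3] @ [l..<n]))" by (metis mset_eq_setD)
  then show ?thesis by auto
qed

lemma ms4:
  assumes ms: "MS k n y = MS k n X" and l: "3 \<le> l" "l < n"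
    and mt: "\<forall>j. 3 \<le> j \<and> j < l \<longrightarrow> y j = X j"
    and lt: "\<forall>j. l < j \<and> j < n \<longrightarrow> y j = X j"
  shows "mset [dl k (y 0), dl k (y 1), dl k (y 2), dl k (y l)] = mset [dl k (X 0), dl k (X 1), dl k (X 2), dl k (X l)]"
proof -
  have sp: "[0..<n] = [0..<3] @ [3..<l] @ [l] @ [Suc l..<n]"
    using upt_split[of 0 3 n] upt_split[of 3 l n] l upt_conv_Cons[of l n] by simp
  have mid: "map (\<lambda>i. dl k (y i)) [3..<l] = map (\<lambda>i. dl k (X i)) [3..<l]" using mt by auto
  have last: "map (\<lambda>i. dl k (y i)) [Suc l..<n] = map (\<lambda>i. dl k (X i)) [Suc l..<n]" using lt by auto
  have "[0..<3] = [0,1,2::nat]" by (simp add: upt_rec)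
  then show ?thesis using ms unfolding MS_def sp by (simp add: mid last add.assoc)
qed

lemma X0c: "dl k (X 0) \<noteq> c" if "cen k c" using X0 that k2 unfolding cen_def by auto
lemma X1c: "dl k (X 1) \<noteq> c" if "cen k c" using X1 that cen_dl[of "X 1" k] Xk[of 1] n3 unfolding cen_def by auto

lemma final_move:
  assumes zpos: "z \<in> pos k n" and l: "3 \<le> l" "l < n" and m: "m < 3"
    and mt: "\<forall>j. 3 \<le> j \<and> j < l \<longrightarrow> z j = X j" and dm: "dl k (z m) = dl k (X l)"
    and s1: "\<exists>j<n. j \<noteq> l \<and> j \<noteq> m \<and> f1 j \<noteq> z j"
    and s2: "\<exists>j<n. j \<noteq> l \<and> j \<noteq> m \<and> f2 j \<noteq> z j"
  shows "\<exists>z'. sreach k n f1 f2 z z' \<and> (\<forall>j. 3 \<le> j \<and> j \<le> l \<longrightarrow> z' j = X j)"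
proof -
  have mn: "m < n" "m \<noteq> l" using m l n3 by auto
  have zk: "z m < k" using zpos mn unfolding pos_def by auto
  have "z m = X l \<or> z m = k - 1 - X l" using dl_eq[OF zk Xk[OF l(2)] dm] .
  then show ?thesis
  proof
    assume e: "z m = X l"
    have "sreach k n f1 f2 z (psi k m l z)"
      using sreach_psi[OF zpos mn(1) l(2) mn(2)] s1 s2 by metis
    moreover have "\<forall>j. 3 \<le> j \<and> j \<le> l \<longrightarrow> psi k m l z j = X j"
      using mt e m unfolding psi_def by (auto simp: le_less)
    ultimately show ?thesis by blast
  next
    assume e: "z m = k - 1 - X l"
    have "sreach k n f1 f2 z (psi k l m z)"
      using sreach_psi[OF zpos l(2) mn(1) mn(2)[symmetric]] s1 s2 by metis
    moreover have "\<forall>j. 3 \<le> j \<and> j \<le> l \<longrightarrow> psi k l m z j = X j"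
      using mt e m Xk[OF l(2)] unfolding psi_def by (auto simp: le_less)
    ultimately show ?thesis by blast
  qed
qed


lemma core:
  assumes ypos: "y \<in> pos k n" and ms: "MS k n y = MS k n X" and l: "3 \<le> l" "l < n"
    and mt: "\<forall>j. 3 \<le> j \<and> j < l \<longrightarrow> y j = X j" and yl: "y l \<noteq> X l"
    and m: "m < 3" and dm: "dl k (y m) = dl k (X l)"
  shows "\<exists>z'. sreach k n f1 f2 y z' \<and> (\<forall>j. 3 \<le> j \<and> j \<le> l \<longrightarrow> z' j = X j)"
proof (cases "\<exists>j. l < j \<and> j < n \<and> y j \<noteq> X j")
  case True
  then obtain j where j: "l < j" "j < n" "y j \<noteq> X j" by blast
  have "f1 j = X j" "f2 j = X j" using fX[of j] j l by auto
  then have "\<exists>j<n. j \<noteq> l \<and> j \<noteq> m \<and> f1 j \<noteq> y j" "\<exists>j<n. j \<noteq> l \<and> j \<noteq> m \<and> f2 j \<noteq> y j"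
    using j m l by (metis less_le_trans not_less_iff_gr_or_eq numeral_le_iff)+
  then show ?thesis using final_move[OF ypos l m mt dm] by blast
next
  case False
  then have lt: "\<forall>j. l < j \<and> j < n \<longrightarrow> y j = X j" by blast
  define i where "i = (if m = 0 then 1 else 0::nat)"
  define i' where "i' = (if m = 2 then 1 else 2::nat)"
  have ii: "i < 3" "i' < 3" "i \<noteq> i'" "i \<noteq> m" "i' \<noteq> m" using m unfolding i_def i'_def by auto
  have m4: "mset [dl k (y 0), dl k (y 1), dl k (y 2), dl k (y l)] = mset [dl k (X 0), dl k (X 1), dl k (X 2), dl k (X l)]"
    using ms4[OF ms l mt lt] .
  have nc: "\<not> (cen k (y i) \<and> cen k (y i'))"
  proof
    assume c: "cen k (y i) \<and> cen k (y i')"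
    then have "y i = y i'" unfolding cen_def by auto
    have yk: "y i < k" "y i' < k" using ypos ii n3 unfolding pos_def by auto
    let ?c = "y i"
    have cc: "cen k ?c" using c by blast
    have d1: "dl k (y i) = ?c" "dl k (y i') = ?c" using c yk unfolding dl_def cen_def by auto
    have "count (mset [dl k (y 0), dl k (y 1), dl k (y 2), dl k (y l)]) ?c = count (mset [dl k (X 0), dl k (X 1), dl k (X 2), dl k (X l)]) ?c"
      using m4 by simp
    moreover have "m = 0 \<or> m = 1 \<or> m = 2" using m by auto
    ultimately show False using X0c[OF cc] X1c[OF cc] d1 dm unfolding i_def i'_def
      by (elim disjE) (auto split: if_splits)
  qed
  obtain y' where y': "sreach k n f1 f2 y y'" "\<forall>j. j \<noteq> i \<and> j \<noteq> i' \<longrightarrow> y' j = y j"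
     "f1 i \<noteq> y' i \<or> f1 i' \<noteq> y' i'" "f2 i \<noteq> y' i \<or> f2 i' \<noteq> y' i'"
    using prerot[OF ypos l yl ii(1-3) nc] by blast
  have y'pos: "y' \<in> pos k n" using y'(1) sreach_reach reach_pos ypos by blast
  have li: "l \<noteq> i" "l \<noteq> i'" using l ii by auto
  have mt': "\<forall>j. 3 \<le> j \<and> j < l \<longrightarrow> y' j = X j" using mt y'(2) ii by auto
  have dm': "dl k (y' m) = dl k (X l)" using dm y'(2) ii by auto
  have in3: "i < n" "i' < n" using ii n3 by auto
  have "\<exists>j<n. j \<noteq> l \<and> j \<noteq> m \<and> f1 j \<noteq> y' j" "\<exists>j<n. j \<noteq> l \<and> j \<noteq> m \<and> f2 j \<noteq> y' j"
    using y'(3,4) ii li in3 by metis+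
  then obtain z' where "sreach k n f1 f2 y' z'" "\<forall>j. 3 \<le> j \<and> j \<le> l \<longrightarrow> z' j = X j"
    using final_move[OF y'pos l m mt' dm'] by blast
  then show ?thesis using y'(1) sreach_trans by blast
qed


lemma flip_moves:
  assumes zpos: "z \<in> pos k n" and l: "3 \<le> l" "l < n"
    and mt: "\<forall>j. 3 \<le> j \<and> j < l \<longrightarrow> z j = X j" and zl: "z l = k - 1 - X l"
    and s1: "\<exists>j<n. j \<noteq> l \<and> j \<noteq> 0 \<and> f1 j \<noteq> z j"
    and s2: "\<exists>j<n. j \<noteq> l \<and> j \<noteq> 0 \<and> f2 j \<noteq> z j"
  shows "\<exists>z'. sreach k n f1 f2 z z' \<and> (\<forall>j. 3 \<le> j \<and> j \<le> l \<longrightarrow> z' j = X j)"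
proof -
  have l0: "l \<noteq> 0" "0 < n" using l by auto
  define z1 where "z1 = psi k l 0 z"
  have a: "sreach k n f1 f2 z z1" unfolding z1_def using sreach_psi[OF zpos l(2) l0(2) l0(1)] s1 s2 by metis
  have z1pos: "z1 \<in> pos k n" unfolding z1_def using psi_pos zpos l l0 by blast
  have z1o: "\<forall>j. j \<noteq> l \<and> j \<noteq> 0 \<longrightarrow> z1 j = z j" unfolding z1_def psi_def by auto
  have s1': "\<exists>j<n. j \<noteq> l \<and> j \<noteq> 0 \<and> f1 j \<noteq> z1 j" "\<exists>j<n. j \<noteq> l \<and> j \<noteq> 0 \<and> f2 j \<noteq> z1 j"
    using s1 s2 z1o by metis+
  have b: "sreach k n f1 f2 z1 (psi k l 0 z1)" using sreach_psi[OF z1pos l(2) l0(2) l0(1)] s1' by metis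
  have "psi k l 0 z1 l = k - 1 - z l" unfolding z1_def psi_def using l0 by simp
  then have "psi k l 0 z1 l = X l" using zl Xk[OF l(2)] by simp
  moreover have "\<forall>j. 3 \<le> j \<and> j < l \<longrightarrow> psi k l 0 z1 j = X j" using mt z1o unfolding psi_def by auto
  ultimately show ?thesis using a b sreach_trans by (intro exI[of _ "psi k l 0 z1"]) (auto simp: le_less)
qed

lemma flip:
  assumes ypos: "y \<in> pos k n" and ms: "MS k n y = MS k n X" and l: "3 \<le> l" "l < n"
    and mt: "\<forall>j. 3 \<le> j \<and> j < l \<longrightarrow> y j = X j" and yl: "y l \<noteq> X l"
    and dm: "dl k (y l) = dl k (X l)"
  shows "\<exists>z'. sreach k n f1 f2 y z' \<and> (\<forall>j. 3 \<le> j \<and> j \<le> l \<longrightarrow> z' j = X j)"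
proof -
  have ylk: "y l < k" using ypos l unfolding pos_def by auto
  have zl: "y l = k - 1 - X l" using dl_eq[OF ylk Xk[OF l(2)] dm] yl by blast
  show ?thesis
  proof (cases "\<exists>j. l < j \<and> j < n \<and> y j \<noteq> X j")
    case True
    then obtain j where j: "l < j" "j < n" "y j \<noteq> X j" by blast
    have "f1 j = X j" "f2 j = X j" using fX[of j] j l by auto
    then have "\<exists>j<n. j \<noteq> l \<and> j \<noteq> 0 \<and> f1 j \<noteq> y j" "\<exists>j<n. j \<noteq> l \<and> j \<noteq> 0 \<and> f2 j \<noteq> y j"
      using j l by (intro exI[of _ j]; auto)+
    then show ?thesis using flip_moves[OF ypos l mt zl] by blast
  next
    case False
    then have lt: "\<forall>j. l < j \<and> j < n \<longrightarrow> y j = X j" by blast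
    have m4: "mset [dl k (y 0), dl k (y 1), dl k (y 2), dl k (y l)] = mset [dl k (X 0), dl k (X 1), dl k (X 2), dl k (X l)]"
      using ms4[OF ms l mt lt] .
    have nc: "\<not> (cen k (y 1) \<and> cen k (y 2))"
    proof
      assume c: "cen k (y 1) \<and> cen k (y 2)"
      have yk: "y 1 < k" "y 2 < k" using ypos n3 unfolding pos_def by auto
      let ?c = "y 1"
      have cc: "cen k ?c" using c by blast
      have d1: "dl k (y 1) = ?c" "dl k (y 2) = ?c" using c yk unfolding dl_def cen_def by auto
      have "count (mset [dl k (y 0), dl k (y 1), dl k (y 2), dl k (y l)]) ?c = count (mset [dl k (X 0), dl k (X 1), dl k (X 2), dl k (X l)]) ?c"
        using m4 by simp
      then show False using X0c[OF cc] X1c[OF cc] d1 dm by (auto split: if_splits)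
    qed
    obtain y' where y': "sreach k n f1 f2 y y'" "\<forall>j. j \<noteq> 1 \<and> j \<noteq> 2 \<longrightarrow> y' j = y j"
       "f1 1 \<noteq> y' 1 \<or> f1 2 \<noteq> y' 2" "f2 1 \<noteq> y' 1 \<or> f2 2 \<noteq> y' 2"
      using prerot[OF ypos l yl, of 1 2] nc by auto
    have y'pos: "y' \<in> pos k n" using y'(1) sreach_reach reach_pos ypos by blast
    have mt': "\<forall>j. 3 \<le> j \<and> j < l \<longrightarrow> y' j = X j" using mt y'(2) by auto
    have zl': "y' l = k - 1 - X l" using zl y'(2) l by auto
    have in3: "1 < n" "2 < n" "l \<noteq> 1" "l \<noteq> 2" using n3 l by auto
    have "\<exists>j<n. j \<noteq> l \<and> j \<noteq> 0 \<and> f1 j \<noteq> y' j" "\<exists>j<n. j \<noteq> l \<and> j \<noteq> 0 \<and> f2 j \<noteq> y' j"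
      using y'(3,4) in3 by (metis one_neq_zero zero_neq_numeral)+
    then obtain z' where "sreach k n f1 f2 y' z'" "\<forall>j. 3 \<le> j \<and> j \<le> l \<longrightarrow> z' j = X j"
      using flip_moves[OF y'pos l mt' zl'] by blast
    then show ?thesis using y'(1) sreach_trans by blast
  qed
qed

lemma step:
  assumes ypos: "y \<in> pos k n" and ms: "MS k n y = MS k n X" and l: "3 \<le> l" "l < n"
    and mt: "\<forall>j. 3 \<le> j \<and> j < l \<longrightarrow> y j = X j"
  shows "\<exists>z'. sreach k n f1 f2 y z' \<and> (\<forall>j. 3 \<le> j \<and> j \<le> l \<longrightarrow> z' j = X j)"
proof (cases "y l = X l")
  case True
  then show ?thesis using mt sreach_refl by (intro exI[of _ y]) (auto simp: le_less)
next
  case yl: False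
  obtain a where a: "a < 3 \<or> (l \<le> a \<and> a < n)" "dl k (y a) = dl k (X l)"
    using find_val[OF ypos ms l mt] by blast
  consider "a < 3" | "a = l" | "l < a" "a < n" using a(1) by linarith
  then show ?thesis
  proof cases
    case 1 then show ?thesis using core[OF ypos ms l mt yl 1 a(2)] by blast
  next
    case 2 then show ?thesis using flip[OF ypos ms l mt yl] a(2) by blast
  next
    case 3
    define z where "z = psi k a 0 y"
    have a0: "a \<noteq> 0" "0 < n" using 3 l by auto
    have fl: "f1 l \<noteq> y l" "f2 l \<noteq> y l" using fX[OF l] yl by auto
    have "sreach k n f1 f2 y z" unfolding z_def
    proof (rule sreach_psi[OF ypos 3(2) a0(2) a0(1)])
      show "\<exists>j<n. j \<noteq> a \<and> j \<noteq> 0 \<and> f1 j \<noteq> y j" using fl l 3 by (intro exI[of _ l]) auto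
      show "\<exists>j<n. j \<noteq> a \<and> j \<noteq> 0 \<and> f2 j \<noteq> y j" using fl l 3 by (intro exI[of _ l]) auto
    qed
    moreover have zpos: "z \<in> pos k n" unfolding z_def using psi_pos ypos 3 a0 by blast
    moreover have "MS k n z = MS k n X" unfolding z_def using MS_psi ypos 3 a0 ms by metis
    moreover have "\<forall>j. 3 \<le> j \<and> j < l \<longrightarrow> z j = X j" using mt 3 unfolding z_def psi_def by auto
    moreover have "z l \<noteq> X l" using yl 3 l unfolding z_def psi_def by auto
    moreover have "dl k (z 0) = dl k (X l)" using a(2) a0 unfolding z_def psi_def by simp
    ultimately obtain z' where "sreach k n f1 f2 y z'" "\<forall>j. 3 \<le> j \<and> j \<le> l \<longrightarrow> z' j = X j"
      using core[OF zpos _ l _ _ _ _, of 0] sreach_trans by (meson zero_less_numeral)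
    then show ?thesis by blast
  qed
qed

lemma tail:
  assumes ypos: "y \<in> pos k n" and ms: "MS k n y = MS k n X"
  shows "\<exists>z'. sreach k n f1 f2 y z' \<and> (\<forall>j. 3 \<le> j \<and> j < n \<longrightarrow> z' j = X j)"
proof -
  have "\<forall>r. 3 + r \<le> n \<longrightarrow> (\<exists>z'. sreach k n f1 f2 y z' \<and> (\<forall>j. 3 \<le> j \<and> j < 3 + r \<longrightarrow> z' j = X j))"
  proof
    fix r show "3 + r \<le> n \<longrightarrow> (\<exists>z'. sreach k n f1 f2 y z' \<and> (\<forall>j. 3 \<le> j \<and> j < 3 + r \<longrightarrow> z' j = X j))"
    proof (induction r)
      case 0 then show ?case using sreach_refl by (intro impI exI[of _ y]) auto
    next
      case (Suc r)
      show ?case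
      proof
        assume r: "3 + Suc r \<le> n"
        then obtain z where z: "sreach k n f1 f2 y z" "\<forall>j. 3 \<le> j \<and> j < 3 + r \<longrightarrow> z j = X j"
          using Suc by auto
        have zpos: "z \<in> pos k n" using z(1) sreach_reach reach_pos ypos by blast
        have zms: "MS k n z = MS k n X" using z(1) sreach_reach MS_reach ypos ms by metis
        have "3 \<le> 3 + r" "3 + r < n" using r by auto
        then obtain z' where z': "sreach k n f1 f2 z z'" "\<forall>j. 3 \<le> j \<and> j \<le> 3 + r \<longrightarrow> z' j = X j"
          using step[OF zpos zms _ _ z(2)] by blast
        have "\<forall>j. 3 \<le> j \<and> j < 3 + Suc r \<longrightarrow> z' j = X j" using z'(2) by (auto simp: less_Suc_eq_le)
        moreover have "sreach k n f1 f2 y z'" using z(1) z'(1) by (rule sreach_trans)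
        ultimately show "\<exists>z'. sreach k n f1 f2 y z' \<and> (\<forall>j. 3 \<le> j \<and> j < 3 + Suc r \<longrightarrow> z' j = X j)"
          by blast
      qed
    qed
  qed
  from this[rule_format, of "n - 3"] show ?thesis using n3 by simp
qed

end


lemma perm3: "mset [a,b,c] = mset [b,a,c]" "mset [a,b,c] = mset [a,c,b]" "mset [a,b,c] = mset [c,b,a]"
  "mset [a,b,c] = mset [b,c,a]" "mset [a,b,c] = mset [c,a,b]"
  by (simp_all add: add_mset_commute)

lemma ms3:
  assumes "j < 3" "j' < 3" "j'' < 3" "j \<noteq> j'" "j \<noteq> j''" "j' \<noteq> j''"
  shows "MS k 3 u = mset [dl k (u j), dl k (u j'), dl k (u j'')]"
proof -
  have u3: "[0..<3] = [0,1,2::nat]" by (simp add: upt_rec)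
  have a: "MS k 3 u = mset [dl k (u 0), dl k (u 1), dl k (u 2)]"
    unfolding MS_def u3 by simp
  have c3: "x < 3 \<Longrightarrow> x = 0 \<or> x = 1 \<or> x = 2" for x :: nat by presburger
  from c3[OF assms(1)] c3[OF assms(2)] c3[OF assms(3)] show ?thesis
    using a assms(4-6) by (elim disjE) (simp_all add: add_mset_commute)
qed



lemma cycle:
  assumes p: "p \<in> pos k d" and ab: "a < d" "b < d" "a \<noteq> b" and v: "v < k"
    and vals: "p a \<in> {v, k-1-v}" "p b \<in> {v, k-1-v}" "x \<in> {v, k-1-v}" "y \<in> {v, k-1-v}"
  shows "reach k d p (p(a := x, b := y))"
proof -
  define R where "R q = psi k a b q" for q
  have RR: "\<And>q. q \<in> pos k d \<Longrightarrow> reach k d q (R q) \<and> R q \<in> pos k d"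
    unfolding R_def using reach_psi psi_pos ab by blast
  have r1: "reach k d p (R p)" "R p \<in> pos k d" using RR p by auto
  have r2: "reach k d p (R (R p))" "R (R p) \<in> pos k d" using RR[OF r1(2)] r1 reach_trans by blast+
  have r3: "reach k d p (R (R (R p)))" using RR[OF r2(2)] r2 reach_trans by blast
  have pk: "p a < k" "p b < k" using vals v by auto
  have e1: "R p = p(a := k-1-p b, b := p a)" unfolding R_def psi_def by simp
  have e2: "R (R p) = p(a := k-1-p a, b := k-1-p b)" unfolding e1 unfolding R_def psi_def using ab
    by (intro ext) simp
  have e3: "R (R (R p)) = p(a := p b, b := k-1-p a)" unfolding e2 unfolding R_def psi_def using ab pk
    by (intro ext) simp
  have "(x,y) = (p a, p b) \<or> (x,y) = (k-1-p b, p a) \<or> (x,y) = (k-1-p a, k-1-p b) \<or> (x,y) = (p b, k-1-p a)"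
  proof -
    have vv: "k - 1 - (k - 1 - v) = v" using v by simp
    from vals(1) have "p a = v \<or> p a = k-1-v" by simp
    moreover from vals(2) have "p b = v \<or> p b = k-1-v" by simp
    moreover from vals(3) have "x = v \<or> x = k-1-v" by simp
    moreover from vals(4) have "y = v \<or> y = k-1-v" by simp
    ultimately show ?thesis by (elim disjE; simp only: vv prod.inject simp_thms)
  qed
  then show ?thesis
  proof (elim disjE)
    assume "(x,y) = (p a, p b)" then show ?thesis using reach_refl by simp
  next
    assume "(x,y) = (k-1-p b, p a)" then show ?thesis using r1 e1 by simp
  next
    assume "(x,y) = (k-1-p a, k-1-p b)" then show ?thesis using r2 e2 by simp
  next
    assume "(x,y) = (p b, k-1-p a)" then show ?thesis using r3 e3 by simp
  qed
qed



lemma pos3_eq':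
  assumes a: "q \<in> pos k 3" "w \<in> pos k 3" "\<forall>l<3. q l = w l"
  shows "q = w"
proof (rule ext)
  fix l
  show "q l = w l"
  proof (cases "l < 3")
    case True then show ?thesis using a(3) by blast
  next
    case False then show ?thesis using a(1,2) unfolding pos_def by auto
  qed
qed

lemma align_one:
  assumes p: "p \<in> pos k d" and jd: "j < d" "e < d" "j \<noteq> e" and i: "i = j \<or> i = e"
    and x: "x < k" and dx: "dl k (p i) = dl k x"
  shows "\<exists>q. reach k d p q \<and> q j = x \<and> (\<forall>l. l \<noteq> j \<and> l \<noteq> e \<longrightarrow> q l = p l)"
proof -
  have pk: "p i < k" "p j < k" "p e < k" using p jd i unfolding pos_def by auto
  have c: "p i = x \<or> p i = k - 1 - x" using dl_eq[OF pk(1) x dx] .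
  from i show ?thesis
  proof
    assume ie: "i = e"
    from c show ?thesis
    proof
      assume "p i = x"
      then show ?thesis using reach_psi[OF p jd(2,1) jd(3)[symmetric]] ie jd
        by (intro exI[of _ "psi k e j p"]) (auto simp: psi_def)
    next
      assume "p i = k - 1 - x"
      then show ?thesis using reach_psi[OF p jd] ie jd x
        by (intro exI[of _ "psi k j e p"]) (auto simp: psi_def)
    qed
  next
    assume ij: "i = j"
    from c show ?thesis
    proof
      assume "p i = x"
      then show ?thesis using reach_refl ij by (intro exI[of _ p]) auto
    next
      assume a: "p i = k - 1 - x"
      have "reach k d (psi k j e p) (psi k j e (psi k j e p))"
        using reach_psi[OF psi_pos[OF p jd(1,2)] jd] .
      then have "reach k d p (psi k j e (psi k j e p))" using reach_psi[OF p jd] reach_trans by blast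
      then show ?thesis using a ij jd x
        by (intro exI[of _ "psi k j e (psi k j e p)"]) (auto simp: psi_def)
    qed
  qed
qed

lemma pos3_eq:
  assumes a: "q \<in> pos k 3" "w \<in> pos k 3" "q 0 = w 0" "q 1 = w 1" "q 2 = w 2"
  shows "q = w"
proof (rule ext)
  fix l
  show "q l = w l"
  proof (cases "l < 3")
    case True then have "l = 0 \<or> l = 1 \<or> l = 2" by auto
    then show ?thesis using a(3-5) by (elim disjE) simp_all
  next
    case False then show ?thesis using a(1,2) unfolding pos_def by auto
  qed
qed



lemma align_first:
  assumes u: "u \<in> pos k 3" and w: "w \<in> pos k 3" and ms: "MS k 3 u = MS k 3 w"
    and jj: "j < 3" "j' < 3" "j'' < 3" "j \<noteq> j'" "j \<noteq> j''" "j' \<noteq> j''"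
  shows "\<exists>q. reach k 3 u q \<and> q j = w j \<and> mset [dl k (q j'), dl k (q j'')] = mset [dl k (w j'), dl k (w j'')]"
proof -
  have "dl k (w j) \<in># MS k 3 u" using ms ms3[OF jj, of k w] by simp
  then have "dl k (w j) \<in> set (map (\<lambda>i. dl k (u i)) [0..<3])" unfolding MS_def by simp
  then obtain i where i: "i < 3" "dl k (u i) = dl k (w j)" by auto
  define e where "e = (if i = j then j' else i)"
  have e: "e < 3" "j \<noteq> e" "i = j \<or> i = e" using jj i unfolding e_def by auto
  have wk: "w j < k" using w jj unfolding pos_def by auto
  obtain q where q: "reach k 3 u q" "q j = w j" using align_one[OF u jj(1) e(1,2) e(3) wk i(2)] by blast
  have "MS k 3 q = MS k 3 w" using MS_reach[OF q(1) u] ms by simp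
  then have "mset [dl k (q j), dl k (q j'), dl k (q j'')] = mset [dl k (w j), dl k (w j'), dl k (w j'')]"
    using ms3[OF jj] by metis
  then show ?thesis using q by auto
qed

lemma align3:
  assumes u: "u \<in> pos k 3" and w: "w \<in> pos k 3" and ms: "MS k 3 u = MS k 3 w"
    and jj: "j < 3" "j' < 3" "j'' < 3" "j \<noteq> j'" "j \<noteq> j''" "j' \<noteq> j''"
  shows "\<exists>q. reach k 3 u q \<and> (q = w \<or> q = w(j'' := k - 1 - w j''))"
proof -
  obtain q where q: "reach k 3 u q" "q j = w j" "mset [dl k (q j'), dl k (q j'')] = mset [dl k (w j'), dl k (w j'')]"
    using align_first[OF u w ms jj] by blast
  have qpos: "q \<in> pos k 3" using reach_pos q(1) u by blast
  have "dl k (w j') \<in># mset [dl k (q j'), dl k (q j'')]" using q(3) by simp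
  then have "dl k (q j') = dl k (w j') \<or> dl k (q j'') = dl k (w j')" by auto
  then obtain i where i: "i = j' \<or> i = j''" "dl k (q i) = dl k (w j')" by blast
  have wk: "w j' < k" "w j'' < k" using w jj unfolding pos_def by auto
  obtain q2 where q2: "reach k 3 q q2" "q2 j' = w j'" "\<forall>l. l \<noteq> j' \<and> l \<noteq> j'' \<longrightarrow> q2 l = q l"
    using align_one[OF qpos jj(2,3,6) i(1) wk(1) i(2)] by blast
  have q2pos: "q2 \<in> pos k 3" using reach_pos q2(1) qpos by blast
  have "MS k 3 q2 = MS k 3 w" using MS_reach[OF q2(1) qpos] MS_reach[OF q(1) u] ms by simp
  then have "mset [dl k (q2 j), dl k (q2 j'), dl k (q2 j'')] = mset [dl k (w j), dl k (w j'), dl k (w j'')]"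
    using ms3[OF jj] by metis
  moreover have "q2 j = w j" using q2(3) q(2) jj by auto
  ultimately have "dl k (q2 j'') = dl k (w j'')" using q2(2) by simp
  moreover have "q2 j'' < k" using q2pos jj unfolding pos_def by auto
  ultimately have c: "q2 j'' = w j'' \<or> q2 j'' = k - 1 - w j''" using dl_eq wk(2) by blast
  have all: "\<forall>l<3. l = j \<or> l = j' \<or> l = j''" using jj by auto
  have r: "reach k 3 u q2" using reach_trans q(1) q2(1) by blast
  from c show ?thesis
  proof
    assume a: "q2 j'' = w j''"
    have "\<forall>l<3. q2 l = w l" using all a q2(2) \<open>q2 j = w j\<close> by auto
    then have "q2 = w" using pos3_eq'[OF q2pos w] by blast
    then show ?thesis using r by blast
  next
    assume a: "q2 j'' = k - 1 - w j''"
    have w': "w(j'' := k - 1 - w j'') \<in> pos k 3" using w wk jj unfolding pos_def by auto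
    have "\<forall>l<3. q2 l = (w(j'' := k - 1 - w j'')) l" using all a q2(2) \<open>q2 j = w j\<close> jj by auto
    then have "q2 = w(j'' := k - 1 - w j'')" using pos3_eq'[OF q2pos w'] by blast
    then show ?thesis using r by blast
  qed
qed

lemma align3_rep:
  assumes u: "u \<in> pos k 3" and w: "w \<in> pos k 3" and ms: "MS k 3 u = MS k 3 w"
    and jj: "j < 3" "j' < 3" "j'' < 3" "j \<noteq> j'" "j \<noteq> j''" "j' \<noteq> j''"
    and rep: "dl k (w j') = dl k (w j'')"
  shows "reach k 3 u w"
proof -
  obtain q where q: "reach k 3 u q" "q j = w j" "mset [dl k (q j'), dl k (q j'')] = mset [dl k (w j'), dl k (w j'')]"
    using align_first[OF u w ms jj] by blast
  have qpos: "q \<in> pos k 3" using reach_pos q(1) u by blast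
  have d: "dl k (q j') = dl k (w j')" "dl k (q j'') = dl k (w j')"
  proof -
    have "set [dl k (q j'), dl k (q j'')] = set [dl k (w j'), dl k (w j'')]" using q(3) by (rule mset_eq_setD)
    then show "dl k (q j') = dl k (w j')" "dl k (q j'') = dl k (w j')" using rep by auto
  qed
  have wk: "w j' < k" "w j'' < k" using w jj unfolding pos_def by auto
  have qk: "q j' < k" "q j'' < k" using qpos jj unfolding pos_def by auto
  have vals: "q j' \<in> {w j', k-1-w j'}" "q j'' \<in> {w j', k-1-w j'}" "w j' \<in> {w j', k-1-w j'}" "w j'' \<in> {w j', k-1-w j'}"
    using dl_eq[OF qk(1) wk(1) d(1)] dl_eq[OF qk(2) wk(1) d(2)] dl_eq[OF wk(2) wk(1) rep[symmetric]] by auto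
  have r2: "reach k 3 q (q(j' := w j', j'' := w j''))"
    using cycle[OF qpos jj(2,3,6) wk(1) vals] .
  have w': "q(j' := w j', j'' := w j'') \<in> pos k 3" using qpos wk jj unfolding pos_def by auto
  have all: "\<forall>l<3. l = j \<or> l = j' \<or> l = j''" using jj by auto
  have "\<forall>l<3. (q(j' := w j', j'' := w j'')) l = w l" using all q(2) jj by auto
  then have "q(j' := w j', j'' := w j'') = w" using pos3_eq'[OF w' w] by blast
  then show ?thesis using reach_trans q(1) r2 by metis
qed



definition rk :: "nat \<Rightarrow> nat \<Rightarrow> (nat \<Rightarrow> nat) \<Rightarrow> nat \<Rightarrow> nat" where
  "rk k n y = (\<lambda>i. if i < n then card {j. j < n \<and> dl k (y j) < dl k (y i)} else i)"

definition lowcnt :: "nat \<Rightarrow> nat \<Rightarrow> (nat \<Rightarrow> nat) \<Rightarrow> nat" where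
  "lowcnt k n y = (\<Sum>l<n. if 2 * y l + 1 < k then 1 else 0)"

definition chir :: "nat \<Rightarrow> nat \<Rightarrow> (nat \<Rightarrow> nat) \<Rightarrow> bool" where
  "chir k n y \<longleftrightarrow> (evenperm (rk k n y) \<longleftrightarrow> even (lowcnt k n y))"

definition chiral :: "nat \<Rightarrow> nat \<Rightarrow> (nat \<Rightarrow> nat) \<Rightarrow> bool" where
  "chiral k n y \<longleftrightarrow> inj_on (\<lambda>i. dl k (y i)) {..<n} \<and> (\<forall>i<n. \<not> cen k (y i))"

lemma rk_lt:
  assumes "i < n" shows "rk k n y i < n"
proof -
  have "{j. j < n \<and> dl k (y j) < dl k (y i)} \<subseteq> {..<n} - {i}" by auto
  then have "card {j. j < n \<and> dl k (y j) < dl k (y i)} \<le> card ({..<n} - {i})" by (intro card_mono) auto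
  then show ?thesis using assms unfolding rk_def by simp
qed

lemma rk_inj:
  assumes inj: "inj_on (\<lambda>i. dl k (y i)) {..<n}"
  shows "inj_on (rk k n y) {..<n}"
proof -
  have less: "rk k n y i < rk k n y i'" if "i < n" "i' < n" "dl k (y i) < dl k (y i')" for i i'
  proof -
    have "{j. j < n \<and> dl k (y j) < dl k (y i)} \<subset> {j. j < n \<and> dl k (y j) < dl k (y i')}"
      using that by auto
    then have "card {j. j < n \<and> dl k (y j) < dl k (y i)} < card {j. j < n \<and> dl k (y j) < dl k (y i')}"
      by (intro psubset_card_mono) auto
    then show ?thesis using that unfolding rk_def by simp
  qed
  show ?thesis
  proof (rule inj_onI)
    fix i i' assume a: "i \<in> {..<n}" "i' \<in> {..<n}" "rk k n y i = rk k n y i'"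
    show "i = i'"
    proof (rule ccontr)
      assume "i \<noteq> i'"
      then have "dl k (y i) \<noteq> dl k (y i')" using inj a(1,2) by (auto dest: inj_onD)
      then show False using less[of i i'] less[of i' i] a by (cases "dl k (y i) < dl k (y i')") auto
    qed
  qed
qed

lemma rk_permutes:
  assumes inj: "inj_on (\<lambda>i. dl k (y i)) {..<n}"
  shows "rk k n y permutes {..<n}"
proof (rule bij_imp_permutes)
  have "rk k n y ` {..<n} \<subseteq> {..<n}" using rk_lt by auto
  then have "rk k n y ` {..<n} = {..<n}" using rk_inj[OF inj] by (simp add: endo_inj_surj)
  then show "bij_betw (rk k n y) {..<n} {..<n}" using rk_inj[OF inj] unfolding bij_betw_def by simp
  show "\<And>x. x \<notin> {..<n} \<Longrightarrow> rk k n y x = x" unfolding rk_def by simp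
qed

lemma dl_psi:
  assumes "y \<in> pos k n" "i < n" "j < n" "l < n"
  shows "dl k (psi k i j y l) = dl k (y (transpose i j l))"
  using assms unfolding psi_def pos_def by (auto simp: transpose_def dl_flip)

lemma transpose_set:
  assumes "i < n" "j < n"
  shows "{j'. j' < n \<and> P (transpose i j j')} = transpose i j ` {j'. j' < n \<and> P j'}"
proof -
  have "transpose i j ` {j'. j' < n \<and> P j'} = {j'. j' < n \<and> P (transpose i j j')}"
    using assms by (auto simp: transpose_def image_iff split: if_splits)
  then show ?thesis by simp
qed

lemma rk_psi:
  assumes y: "y \<in> pos k n" and ij: "i < n" "j < n"
  shows "rk k n (psi k i j y) = rk k n y \<circ> transpose i j"
proof
  fix l
  show "rk k n (psi k i j y) l = (rk k n y \<circ> transpose i j) l"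
  proof (cases "l < n")
    case True
    have tl: "transpose i j l < n" using True ij by (auto simp: transpose_def)
    have "{j'. j' < n \<and> dl k (psi k i j y j') < dl k (psi k i j y l)} =
          {j'. j' < n \<and> dl k (y (transpose i j j')) < dl k (y (transpose i j l))}"
      using dl_psi[OF y ij] True by auto
    also have "\<dots> = transpose i j ` {j'. j' < n \<and> dl k (y j') < dl k (y (transpose i j l))}"
      by (rule transpose_set[OF ij])
    finally have "card {j'. j' < n \<and> dl k (psi k i j y j') < dl k (psi k i j y l)} =
        card {j'. j' < n \<and> dl k (y j') < dl k (y (transpose i j l))}"
      by (simp add: card_image inj_on_transpose)
    then show ?thesis unfolding rk_def using True tl by simp
  next
    case False
    then have "transpose i j l = l" using ij by (auto simp: transpose_def)
    then show ?thesis unfolding rk_def using False by simp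
  qed
qed

lemma lowcnt_split:
  assumes "i < n" "j < n" "i \<noteq> j"
  shows "lowcnt k n y = (if 2 * y i + 1 < k then 1 else 0) + (if 2 * y j + 1 < k then 1 else 0) +
     (\<Sum>l\<in>{..<n} - {i, j}. if 2 * y l + 1 < k then 1 else 0)"
proof -
  have "(\<Sum>l<n. (if 2 * y l + 1 < k then 1 else 0::nat)) =
      (if 2 * y i + 1 < k then 1 else 0) + (\<Sum>l\<in>{..<n} - {i}. if 2 * y l + 1 < k then 1 else 0)"
    using assms by (subst sum.remove[of _ i]) auto
  also have "(\<Sum>l\<in>{..<n} - {i}. (if 2 * y l + 1 < k then 1 else 0::nat)) =
      (if 2 * y j + 1 < k then 1 else 0) + (\<Sum>l\<in>{..<n} - {i} - {j}. if 2 * y l + 1 < k then 1 else 0)"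
    using assms by (subst sum.remove[of _ j]) auto
  finally show ?thesis unfolding lowcnt_def by (simp add: Diff_insert2[symmetric] insert_commute add.assoc)
qed

lemma lowcnt_psi:
  assumes y: "y \<in> pos k n" and ij: "i < n" "j < n" "i \<noteq> j" and nc: "\<not> cen k (y j)"
  shows "even (lowcnt k n (psi k i j y)) \<longleftrightarrow> \<not> even (lowcnt k n y)"
proof -
  have yk: "y j < k" "y i < k" using y ij unfolding pos_def by auto
  have rest: "(\<Sum>l\<in>{..<n} - {i, j}. if 2 * psi k i j y l + 1 < k then 1 else 0::nat) =
      (\<Sum>l\<in>{..<n} - {i, j}. if 2 * y l + 1 < k then 1 else 0)"
    by (rule sum.cong) (auto simp: psi_def)
  have vi: "psi k i j y i = k - 1 - y j" "psi k i j y j = y i" using ij unfolding psi_def by auto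
  have "(2 * (k - 1 - y j) + 1 < k) \<longleftrightarrow> \<not> (2 * y j + 1 < k)" using yk nc unfolding cen_def by auto
  then show ?thesis using lowcnt_split[OF ij, of k "psi k i j y"] lowcnt_split[OF ij, of k y] rest vi
    by auto
qed

lemma chiral_psi:
  assumes y: "y \<in> pos k n" and ij: "i < n" "j < n" "i \<noteq> j" and c: "chiral k n y"
  shows "chiral k n (psi k i j y)"
proof -
  have "inj_on (\<lambda>l. dl k (y (transpose i j l))) {..<n}"
  proof (rule comp_inj_on[of "transpose i j" _ "\<lambda>l. dl k (y l)", unfolded comp_def])
    show "inj_on (transpose i j) {..<n}" by (simp add: inj_on_transpose)
    have "transpose i j ` {..<n} = {..<n}" using ij by (auto simp: transpose_def image_iff)
    then show "inj_on (\<lambda>l. dl k (y l)) (transpose i j ` {..<n})" using c unfolding chiral_def by simp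
  qed
  then have "inj_on (\<lambda>l. dl k (psi k i j y l)) {..<n}"
    using dl_psi[OF y ij(1,2)] by (simp add: inj_on_def)
  moreover have "\<forall>l<n. \<not> cen k (psi k i j y l)"
    using c y ij unfolding chiral_def psi_def pos_def by (auto simp: cen_flip)
  ultimately show ?thesis unfolding chiral_def by simp
qed

lemma chir_psi:
  assumes y: "y \<in> pos k n" and ij: "i < n" "j < n" "i \<noteq> j" and c: "chiral k n y"
  shows "chir k n (psi k i j y) = chir k n y"
proof -
  have inj: "inj_on (\<lambda>i. dl k (y i)) {..<n}" using c unfolding chiral_def by simp
  have pr: "permutation (rk k n y)" using rk_permutes[OF inj] permutes_imp_permutation by blast
  have "evenperm (rk k n (psi k i j y)) \<longleftrightarrow> \<not> evenperm (rk k n y)"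
  proof -
    have "evenperm (transpose i j) = False" using evenperm_swap[of i j] ij by simp
    then show ?thesis unfolding rk_psi[OF y ij(1,2)] using evenperm_comp[OF pr permutation_swap_id, of i j] by simp
  qed
  moreover have "even (lowcnt k n (psi k i j y)) \<longleftrightarrow> \<not> even (lowcnt k n y)"
    using lowcnt_psi[OF y ij] c ij unfolding chiral_def by blast
  ultimately show ?thesis unfolding chir_def by blast
qed

lemma chir_comb:
  assumes "g \<in> comb k n" "y \<in> pos k n" "chiral k n y"
  shows "chiral k n (g y) \<and> chir k n (g y) = chir k n y"
  using comb_inv[of g k n y "\<lambda>q. chiral k n q \<and> chir k n q = chir k n y"] assms chiral_psi chir_psi by auto

lemma chir_flip:
  assumes y: "y \<in> pos k n" and a: "a < n" and c: "chiral k n y"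
  shows "chir k n (y(a := k - 1 - y a)) \<noteq> chir k n y"
proof -
  have ya: "y a < k" using y a unfolding pos_def by auto
  have dd: "\<And>j. dl k ((y(a := k - 1 - y a)) j) = dl k (y j)" using dl_flip[OF ya] by simp
  have "rk k n (y(a := k - 1 - y a)) = rk k n y"
    unfolding rk_def dd by (rule refl)
  moreover have "even (lowcnt k n (y(a := k - 1 - y a))) \<longleftrightarrow> \<not> even (lowcnt k n y)"
  proof -
    have s: "lowcnt k n z = (if 2 * z a + 1 < k then 1 else 0) + (\<Sum>l\<in>{..<n} - {a}. if 2 * z l + 1 < k then 1 else 0)" for z
      unfolding lowcnt_def using a by (subst sum.remove[of _ a]) auto
    have rest: "(\<Sum>l\<in>{..<n} - {a}. if 2 * (y(a := k - 1 - y a)) l + 1 < k then 1 else 0::nat) =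
      (\<Sum>l\<in>{..<n} - {a}. if 2 * y l + 1 < k then 1 else 0)"
      by (rule sum.cong) auto
    have "(2 * (k - 1 - y a) + 1 < k) \<longleftrightarrow> \<not> (2 * y a + 1 < k)" using ya c a unfolding chiral_def cen_def by auto
    then show ?thesis using s[of y] s[of "y(a := k - 1 - y a)"] rest by auto
  qed
  ultimately show ?thesis unfolding chir_def by auto
qed

lemma chiral_MS:
  assumes "MS k n y = MS k n y'" "y \<in> pos k n" "y' \<in> pos k n" "chiral k n y"
  shows "chiral k n y'"
proof -
  have d: "distinct (map (\<lambda>i. dl k (y i)) [0..<n])" using assms(4) unfolding chiral_def
    by (simp add: distinct_map atLeast0LessThan)
  have "distinct (map (\<lambda>i. dl k (y' i)) [0..<n])"
    using mset_eq_imp_distinct_iff[of "map (\<lambda>i. dl k (y i)) [0..<n]" "map (\<lambda>i. dl k (y' i)) [0..<n]"] assms(1) d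
    unfolding MS_def by simp
  then have "inj_on (\<lambda>i. dl k (y' i)) {..<n}" by (simp add: distinct_map atLeast0LessThan)
  moreover have "\<forall>i<n. \<not> cen k (y' i)"
  proof (intro allI impI)
    fix i assume i: "i < n"
    have "dl k (y' i) \<in> set (map (\<lambda>i. dl k (y i)) [0..<n])"
      using mset_eq_setD[OF assms(1)[unfolded MS_def]] i by auto
    then obtain i' where i': "i' < n" "dl k (y' i) = dl k (y i')" by auto
    have "y' i < k" "y i' < k" using assms(2,3) i i' unfolding pos_def by auto
    then show "\<not> cen k (y' i)" using i' assms(4) cen_dl unfolding chiral_def by metis
  qed
  ultimately show ?thesis unfolding chiral_def by simp
qed



definition lift :: "(nat \<Rightarrow> nat) \<Rightarrow> (nat \<Rightarrow> nat) \<Rightarrow> (nat \<Rightarrow> nat)" where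
  "lift X u = (\<lambda>l. if l < 3 then u l else X l)"

lemma restr012: "restr {0,1,2} q = (\<lambda>t. if t < 3 then q t else 0)"
proof -
  have "{0,1,2::nat} = {0..<3}" by auto
  then have "sorted_list_of_set {0,1,2::nat} = [0..<3]" by simp
  then show ?thesis unfolding restr_def by (intro ext) simp
qed

lemma restr_pos: "3 \<le> n \<Longrightarrow> q \<in> pos k n \<Longrightarrow> restr {0,1,2} q \<in> pos k 3"
  unfolding restr012 pos_def by auto

lemma lift_restr:
  assumes "q \<in> pos k n" "X \<in> pos k n" "\<forall>l. 3 \<le> l \<and> l < n \<longrightarrow> q l = X l"
  shows "lift X (restr {0,1,2} q) = q"
proof
  fix l show "lift X (restr {0,1,2} q) l = q l"
    using assms unfolding lift_def restr012 pos_def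
    by (cases "l < 3"; cases "l < n") auto
qed

lemma restr_lift: "u \<in> pos k 3 \<Longrightarrow> restr {0,1,2} (lift X u) = u"
  unfolding restr012 lift_def pos_def by (intro ext) auto

lemma lift_pos: "X \<in> pos k n \<Longrightarrow> 3 \<le> n \<Longrightarrow> u \<in> pos k 3 \<Longrightarrow> lift X u \<in> pos k n"
  unfolding lift_def pos_def by auto

lemma lift_upd: "j < 3 \<Longrightarrow> lift X (w(j := v)) = (lift X w)(j := v)"
  unfolding lift_def by (intro ext) auto

lemma lift_move:
  assumes X: "X \<in> pos k n" and n: "3 \<le> n" and ij: "i < 3" "j < 3" and w: "w \<in> pos k 3"
  shows "move k n i j (\<lambda>l. if l < 3 then c l else X l) (lift X w) = lift X (move k 3 i j c w)"
proof -
  have lp: "lift X w \<in> pos k n" using lift_pos[OF X n w] .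
  have cond: "(\<forall>l<n. l \<noteq> i \<and> l \<noteq> j \<longrightarrow> lift X w l = (if l < 3 then c l else X l)) \<longleftrightarrow>
        (\<forall>l<3. l \<noteq> i \<and> l \<noteq> j \<longrightarrow> w l = c l)"
    using n unfolding lift_def by auto
  have ps: "psi k i j (lift X w) = lift X (psi k i j w)"
    using ij unfolding psi_def lift_def by (intro ext) auto
  show ?thesis
  proof (cases "\<forall>l<3. l \<noteq> i \<and> l \<noteq> j \<longrightarrow> w l = c l")
    case True then show ?thesis unfolding move_def using lp w cond ps by simp
  next
    case False
    have a: "move k n i j (\<lambda>l. if l < 3 then c l else X l) (lift X w) = lift X w"
      unfolding move_def using False cond by metis
    have b: "move k 3 i j c w = w" unfolding move_def using False by metis
    show ?thesis using a b by simp
  qed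
qed

lemma lift_comb:
  assumes X: "X \<in> pos k n" and n: "3 \<le> n" and h: "h \<in> comb k 3"
  shows "\<exists>H\<in>comb k n. \<forall>u\<in>pos k 3. H (lift X u) = lift X (h u)"
  using h
proof (induction h rule: comb.induct)
  case comb_id then show ?case using comb.comb_id by (intro bexI[of _ id]) auto
next
  case (comb_step h m)
  obtain H where H: "H \<in> comb k n" "\<forall>u\<in>pos k 3. H (lift X u) = lift X (h u)" using comb_step.IH by blast
  obtain i j c where m: "i < 3" "j < 3" "i \<noteq> j" "\<forall>l<3. l \<noteq> i \<and> l \<noteq> j \<longrightarrow> c l < k" "m = move k 3 i j c"
    using comb_step.hyps(2) unfolding is_move_def by blast
  define c' where "c' = (\<lambda>l. if l < 3 then c l else X l)"
  have mv: "is_move k n (move k n i j c')" unfolding is_move_def c'_def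
    using m X n unfolding pos_def by (intro exI[of _ i] exI[of _ j] exI[of _ "\<lambda>l. if l < 3 then c l else X l"]) auto
  have "move k n i j c' \<circ> H \<in> comb k n" using comb.comb_step[OF H(1) mv] .
  moreover have "\<forall>u\<in>pos k 3. (move k n i j c' \<circ> H) (lift X u) = lift X ((m \<circ> h) u)"
  proof
    fix u assume u: "u \<in> pos k 3"
    have hu: "h u \<in> pos k 3" using comb_pos[OF comb_step.hyps(1) u] .
    show "(move k n i j c' \<circ> H) (lift X u) = lift X ((m \<circ> h) u)"
      using H(2) u lift_move[OF X n m(1,2) hu, of c] m(5) unfolding c'_def by simp
  qed
  ultimately show ?case by blast
qed

lemma MS_split3:
  assumes "3 \<le> n"
  shows "MS k n q = MS k 3 (restr {0,1,2} q) + mset (map (\<lambda>i. dl k (q i)) [3..<n])"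
proof -
  have sp: "[0..<n] = [0..<3] @ [3..<n]" using upt_split[of 0 3 n] assms by simp
  have e: "map (\<lambda>i. dl k (restr {0,1,2} q i)) [0..<3] = map (\<lambda>i. dl k (q i)) [0..<3]"
    unfolding restr012 by simp
  show ?thesis unfolding MS_def sp map_append mset_append e by (rule refl)
qed

lemma final3:
  assumes k2: "2 \<le> k" and n: "3 \<le> n" and X: "X \<in> pos k n" and W: "W \<in> pos k n"
    and tl: "\<forall>l. 3 \<le> l \<and> l < n \<longrightarrow> W l = X l" and ms: "MS k n W = MS k n X"
    and str: "cen k (X 2) \<or> dl k (X 1) = dl k (X 2) \<or> dl k (X 0) = dl k (X 1) \<or>
              (chiral k n X \<and> chir k n W = chir k n X)"
  shows "reach k 3 (restr {0,1,2} X) (restr {0,1,2} W)"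
proof -
  define u where "u = restr {0,1,2} X"
  define w where "w = restr {0,1,2} W"
  have u: "u \<in> pos k 3" unfolding u_def using restr_pos[OF n X] .
  have w: "w \<in> pos k 3" unfolding w_def using restr_pos[OF n W] .
  have tl': "map (\<lambda>i. dl k (W i)) [3..<n] = map (\<lambda>i. dl k (X i)) [3..<n]" using tl by simp
  have msuw: "MS k 3 u = MS k 3 w" using ms MS_split3[OF n, of k W] MS_split3[OF n, of k X] tl'
    unfolding u_def w_def by simp
  have uv: "u 0 = X 0" "u 1 = X 1" "u 2 = X 2" unfolding u_def restr012 by simp_all
  have wv: "w 0 = W 0" "w 1 = W 1" "w 2 = W 2" unfolding w_def restr012 by simp_all
  have msu: "MS k 3 u = mset [dl k (u 0), dl k (u 1), dl k (u 2)]" using ms3[of 0 1 2] by simp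
  have msw: "MS k 3 w = mset [dl k (w 0), dl k (w 1), dl k (w 2)]" using ms3[of 0 1 2] by simp
  have wk: "w 0 < k" "w 1 < k" "w 2 < k" "u 2 < k" using u w unfolding pos_def by auto
  consider "cen k (X 2)" | "dl k (X 1) = dl k (X 2) \<or> dl k (X 0) = dl k (X 1)" | "chiral k n X \<and> chir k n W = chir k n X"
    using str by blast
  then show ?thesis
  proof cases
    case 1
    have "dl k (u 2) \<in># MS k 3 u" using msu by simp
    then have "dl k (u 2) \<in># MS k 3 w" using msuw by simp
    then have "dl k (u 2) \<in> {dl k (w 0), dl k (w 1), dl k (w 2)}" using msw by simp
    moreover have cu: "cen k (dl k (u 2))" using 1 uv cen_dl wk by simp
    moreover have "dl k (u 2) = dl k (w j) \<Longrightarrow> j < 3 \<Longrightarrow> cen k (w j)" for j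
      using cu cen_dl[of "w j" k] w unfolding pos_def by auto
    ultimately have "cen k (w 0) \<or> cen k (w 1) \<or> cen k (w 2)" by auto
    moreover have "cen k (w j) \<Longrightarrow> w(j := k - 1 - w j) = w" for j unfolding cen_def by auto
    ultimately show ?thesis
      using align3[OF u w msuw, of 1 2 0] align3[OF u w msuw, of 0 2 1] align3[OF u w msuw, of 0 1 2]
      unfolding u_def w_def by auto
  next
    case 2
    then have "\<not> distinct [dl k (u 0), dl k (u 1), dl k (u 2)]" using uv by auto
    then have "\<not> distinct [dl k (w 0), dl k (w 1), dl k (w 2)]"
      using mset_eq_imp_distinct_iff msuw msu msw by metis
    then have "dl k (w 0) = dl k (w 1) \<or> dl k (w 0) = dl k (w 2) \<or> dl k (w 1) = dl k (w 2)" by auto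
    then show ?thesis
      using align3_rep[OF u w msuw, of 2 0 1] align3_rep[OF u w msuw, of 1 0 2] align3_rep[OF u w msuw, of 0 1 2]
      unfolding u_def w_def by auto
  next
    case 3
    obtain q where q: "reach k 3 u q" "q = w \<or> q = w(2 := k - 1 - w 2)" using align3[OF u w msuw, of 0 1 2] by auto
    show ?thesis
    proof (cases "q = w")
      case True then show ?thesis using q unfolding u_def w_def by simp
    next
      case False
      then have qw: "q = w(2 := k - 1 - w 2)" using q by blast
      obtain h where h: "h \<in> comb k 3" "h u = q" using q(1) unfolding reach_def by blast
      obtain H where H: "H \<in> comb k n" "\<forall>u\<in>pos k 3. H (lift X u) = lift X (h u)"
        using lift_comb[OF X n h(1)] by blast
      have lX: "lift X u = X" unfolding u_def using lift_restr[OF X X] by simp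
      have lW: "lift X w = W" unfolding w_def using lift_restr[OF W X tl] .
      have HX: "H X = W(2 := k - 1 - W 2)" using H(2) u h(2) qw lX lW lift_upd[of 2 X w] wv by force
      have "chir k n (H X) = chir k n X" using chir_comb[OF H(1) X] 3 by blast
      moreover have cW: "chiral k n W" using chiral_MS[OF ms[symmetric] X W] 3 by blast
      moreover have "chir k n (W(2 := k - 1 - W 2)) \<noteq> chir k n W" using chir_flip[OF W _ cW] n by simp
      ultimately show ?thesis using HX 3 by simp
    qed
  qed
qed



lemma psi_same: "psi k i i p = p"
  unfolding psi_def by simp

lemma reach_psi': "p \<in> pos k d \<Longrightarrow> i < d \<Longrightarrow> j < d \<Longrightarrow> reach k d p (psi k i j p)"
  using reach_psi[of p k d i j] reach_refl psi_same by (cases "i = j") auto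

lemma phase1:
  assumes p: "p \<in> pos k n" and n: "3 \<le> n" and a: "a0 < n" "a1 < n" "a2 < n" "a0 \<noteq> a1" "a0 \<noteq> a2" "a1 \<noteq> a2"
  shows "\<exists>X. reach k n p X \<and> dl k (X 0) = dl k (p a0) \<and> dl k (X 1) = dl k (p a1) \<and> dl k (X 2) = dl k (p a2)"
proof -
  define t1 where "t1 = transpose 0 a0"
  define q1 where "q1 = psi k 0 a0 p"
  define b1 where "b1 = t1 a1"
  define t2 where "t2 = transpose 1 b1"
  define q2 where "q2 = psi k 1 b1 q1"
  define b2 where "b2 = t2 (t1 a2)"
  define t3 where "t3 = transpose 2 b2"
  define q3 where "q3 = psi k 2 b2 q2"
  have n0: "0 < n" "1 < n" "2 < n" using n by auto
  have b1: "b1 < n" "b1 \<noteq> 0" unfolding b1_def t1_def using a n0 by (auto simp: transpose_def)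
  have t1a2: "t1 a2 < n" "t1 a2 \<noteq> 0" "t1 a2 \<noteq> b1" unfolding b1_def t1_def using a n0 by (auto simp: transpose_def)
  have b2: "b2 < n" "b2 \<noteq> 0" "b2 \<noteq> 1" unfolding b2_def t2_def using t1a2 b1 n0 by (auto simp: transpose_def)
  have r1: "reach k n p q1" unfolding q1_def using reach_psi'[OF p n0(1) a(1)] .
  have q1p: "q1 \<in> pos k n" using reach_pos[OF r1 p] .
  have r2: "reach k n q1 q2" unfolding q2_def using reach_psi'[OF q1p n0(2) b1(1)] .
  have q2p: "q2 \<in> pos k n" using reach_pos[OF r2 q1p] .
  have r3: "reach k n q2 q3" unfolding q3_def using reach_psi'[OF q2p n0(3) b2(1)] .
  have d1: "\<And>l. l < n \<Longrightarrow> dl k (q1 l) = dl k (p (t1 l))" unfolding q1_def t1_def using dl_psi[OF p n0(1) a(1)] .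
  have d2: "\<And>l. l < n \<Longrightarrow> dl k (q2 l) = dl k (q1 (t2 l))" unfolding q2_def t2_def using dl_psi[OF q1p n0(2) b1(1)] .
  have d3: "\<And>l. l < n \<Longrightarrow> dl k (q3 l) = dl k (q2 (t3 l))" unfolding q3_def t3_def using dl_psi[OF q2p n0(3) b2(1)] .
  have "t3 0 = 0" "t3 1 = 1" "t3 2 = b2" unfolding t3_def using b2 by (auto simp: transpose_def)
  moreover have "t2 0 = 0" "t2 1 = b1" "t2 b2 = t1 a2" unfolding t2_def b2_def using b1 t1a2 by (auto simp: transpose_def)
  moreover have "t1 0 = a0" "t1 b1 = a1" "t1 (t1 a2) = a2" unfolding t1_def b1_def by (auto simp: transpose_def)
  ultimately have "dl k (q3 0) = dl k (p a0)" "dl k (q3 1) = dl k (p a1)" "dl k (q3 2) = dl k (p a2)"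
    using d1 d2 d3 n0 b1 b2 t1a2 by auto
  moreover have "reach k n p q3" using r1 r2 r3 reach_trans by blast
  ultimately show ?thesis by blast
qed

definition FR :: "nat \<Rightarrow> nat \<Rightarrow> (nat \<Rightarrow> nat) \<Rightarrow> bool" where
  "FR k n q \<longleftrightarrow> (\<exists>i<n. dl k (q i) = 0 \<and> (\<forall>j<n. j \<noteq> i \<longrightarrow> cen k (q j)))"

lemma cen_psi:
  assumes "y \<in> pos k n" "i < n" "j < n" "l < n"
  shows "cen k (psi k i j y l) \<longleftrightarrow> cen k (y (transpose i j l))"
  using assms unfolding psi_def pos_def by (auto simp: transpose_def cen_flip)

lemma FR_psi:
  assumes y: "y \<in> pos k n" and ij: "i < n" "j < n"
  shows "FR k n (psi k i j y) \<longleftrightarrow> FR k n y"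
proof -
  let ?t = "transpose i j"
  have tn: "\<And>l. l < n \<Longrightarrow> ?t l < n" using ij by (auto simp: transpose_def)
  have tt: "\<And>l. ?t (?t l) = l" by simp
  show ?thesis
  proof
    assume "FR k n (psi k i j y)"
    then obtain a where a: "a < n" "dl k (psi k i j y a) = 0" "\<forall>b<n. b \<noteq> a \<longrightarrow> cen k (psi k i j y b)"
      unfolding FR_def by blast
    have "dl k (y (?t a)) = 0" using a dl_psi[OF y ij] by simp
    moreover have "\<forall>b<n. b \<noteq> ?t a \<longrightarrow> cen k (y b)"
    proof (intro allI impI)
      fix b assume b: "b < n" "b \<noteq> ?t a"
      then have "?t b \<noteq> a" "?t b < n" using tt tn by metis+
      then show "cen k (y b)" using a(3) cen_psi[OF y ij] tt by metis
    qed
    ultimately show "FR k n y" unfolding FR_def using tn a(1) by blast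
  next
    assume "FR k n y"
    then obtain a where a: "a < n" "dl k (y a) = 0" "\<forall>b<n. b \<noteq> a \<longrightarrow> cen k (y b)"
      unfolding FR_def by blast
    have "dl k (psi k i j y (?t a)) = 0" using a dl_psi[OF y ij] tn tt by simp
    moreover have "\<forall>b<n. b \<noteq> ?t a \<longrightarrow> cen k (psi k i j y b)"
    proof (intro allI impI)
      fix b assume b: "b < n" "b \<noteq> ?t a"
      then have "?t b \<noteq> a" "?t b < n" using tt tn by metis+
      then show "cen k (psi k i j y b)" using a(3) cen_psi[OF y ij] b by metis
    qed
    ultimately show "FR k n (psi k i j y)" unfolding FR_def using tn a(1) by blast
  qed
qed

lemma FR_comb: "g \<in> comb k n \<Longrightarrow> y \<in> pos k n \<Longrightarrow> FR k n (g y) \<longleftrightarrow> FR k n y"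
  using comb_inv[of g k n y "\<lambda>q. FR k n q = FR k n y"] FR_psi by auto

lemma dl0: "x < k \<Longrightarrow> dl k x = 0 \<longleftrightarrow> x = 0 \<or> x = k - 1"
  unfolding dl_def by auto

lemma dl0_ncen: "2 \<le> k \<Longrightarrow> x < k \<Longrightarrow> dl k x = 0 \<Longrightarrow> \<not> cen k x"
  unfolding dl_def cen_def by auto

lemma dl_0 [simp]: "dl k 0 = 0" and dl_k1 [simp]: "dl k (k - Suc 0) = 0"
  unfolding dl_def by auto

lemma frame_FR:
  assumes "odd k"
  shows "frame_class k n = {q \<in> pos k n. FR k n q}"
proof -
  have c: "x < k \<Longrightarrow> cen k x \<longleftrightarrow> x = (k - 1) div 2" for x using assms unfolding cen_def by presburger
  show ?thesis
  proof (intro set_eqI iffI)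
    fix q assume "q \<in> frame_class k n"
    then obtain i where i: "q \<in> pos k n" "i < n" "q i = 0 \<or> q i = k - 1" "\<forall>j<n. j \<noteq> i \<longrightarrow> q j = (k - 1) div 2"
      unfolding frame_class_def using assms by auto
    have "dl k (q i) = 0" using i(3) by auto
    moreover have "\<forall>j<n. j \<noteq> i \<longrightarrow> cen k (q j)" using i(1,4) c unfolding pos_def by auto
    ultimately show "q \<in> {q \<in> pos k n. FR k n q}" unfolding FR_def using i(1,2) by blast
  next
    fix q assume "q \<in> {q \<in> pos k n. FR k n q}"
    then obtain i where i: "q \<in> pos k n" "i < n" "dl k (q i) = 0" "\<forall>j<n. j \<noteq> i \<longrightarrow> cen k (q j)"
      unfolding FR_def by auto
    have "q i = 0 \<or> q i = k - 1" using i(1-3) dl0 unfolding pos_def by auto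
    moreover have "\<forall>j<n. j \<noteq> i \<longrightarrow> q j = (k - 1) div 2" using i(1,4) c unfolding pos_def by auto
    ultimately show "q \<in> frame_class k n" unfolding frame_class_def using assms i(1,2) by auto
  qed
qed

lemma cen_eq: "cen k x \<Longrightarrow> cen k y \<Longrightarrow> x = y"
  unfolding cen_def by simp

lemma third: "3 \<le> n \<Longrightarrow> \<exists>c<n. c \<noteq> x \<and> c \<noteq> (y::nat)"
proof -
  assume "3 \<le> n"
  then have "0 < n" "1 < n" "2 < n" by auto
  then show ?thesis by (metis one_neq_zero numeral_One numeral_eq_iff semiring_norm(85) zero_neq_numeral)
qed

lemma not_frame:
  assumes k2: "2 \<le> k" and n: "3 \<le> n" and A: "conn_class k n A" and nf: "A \<noteq> frame_class k n"
    and p1: "p1 \<in> A" and i0: "i0 < n" "dl k (p1 i0) = 0"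
  shows "\<exists>i1<n. i1 \<noteq> i0 \<and> \<not> cen k (p1 i1)"
proof (rule ccontr)
  assume "\<not> ?thesis"
  then have allc: "\<forall>j<n. j \<noteq> i0 \<longrightarrow> cen k (p1 j)" by blast
  obtain p0 where p0: "external k n p0" "A = {g p0 | g. g \<in> comb k n}" using A unfolding conn_class_def by blast
  have p0p: "p0 \<in> pos k n" using p0(1) unfolding external_def by blast
  obtain g1 where g1: "g1 \<in> comb k n" "p1 = g1 p0" using p1 p0(2) by blast
  have p1p: "p1 \<in> pos k n" using comb_pos g1 p0p by blast
  have FR1: "FR k n p1" unfolding FR_def using i0 allc by blast
  have FR0: "FR k n p0" using FR_comb[OF g1(1) p0p] FR1 g1(2) by simp
  obtain j where j: "j < n" "j \<noteq> i0" using third[OF n, of i0 i0] by blast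
  have "k = 2 * p1 j + 1" using allc j unfolding cen_def by simp
  then have ok: "odd k" by simp
  have sub1: "A \<subseteq> frame_class k n"
  proof
    fix q assume "q \<in> A"
    then obtain g where g: "g \<in> comb k n" "q = g p0" using p0(2) by blast
    then show "q \<in> frame_class k n" unfolding frame_FR[OF ok] using FR_comb[OF g(1) p0p] FR0 comb_pos[OF g(1) p0p] by simp
  qed
  have sub2: "frame_class k n \<subseteq> A"
  proof
    fix q assume "q \<in> frame_class k n"
    then have q: "q \<in> pos k n" "FR k n q" unfolding frame_FR[OF ok] by auto
    obtain j0 where j0: "j0 < n" "dl k (q j0) = 0" "\<forall>l<n. l \<noteq> j0 \<longrightarrow> cen k (q l)" using q(2) unfolding FR_def by blast
    obtain e where e: "e < n" "e \<noteq> j0" "i0 = j0 \<or> i0 = e"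
    proof (cases "i0 = j0")
      case True
      obtain e where "e < n" "e \<noteq> j0" using j True by blast
      then show ?thesis using that True by blast
    next
      case False then show ?thesis using that i0 by blast
    qed
    have qk: "q j0 < k" using q j0 unfolding pos_def by auto
    obtain r where r: "reach k n p1 r" "r j0 = q j0"
      using align_one[OF p1p j0(1) e(1) e(2)[symmetric] e(3) qk] i0(2) j0(2) by auto
    have rp: "r \<in> pos k n" using reach_pos[OF r(1) p1p] .
    obtain h where h: "h \<in> comb k n" "h p1 = r" using r(1) unfolding reach_def by blast
    have "FR k n r" using FR_comb[OF h(1) p1p] FR1 h(2) by simp
    then obtain i' where i': "i' < n" "dl k (r i') = 0" "\<forall>l<n. l \<noteq> i' \<longrightarrow> cen k (r l)" unfolding FR_def by blast
    have "\<not> cen k (r j0)" using dl0_ncen[OF k2 qk j0(2)] r(2) by simp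
    then have "i' = j0" using i'(3) j0(1) by blast
    have "r = q"
    proof
      fix l show "r l = q l"
      proof (cases "l < n")
        case True
        then show ?thesis using r(2) i'(3) j0(3) \<open>i' = j0\<close> cen_eq by (cases "l = j0") auto
      next
        case False then show ?thesis using rp q(1) unfolding pos_def by auto
      qed
    qed
    then have "q = (h \<circ> g1) p0" using h g1 by simp
    moreover have "h \<circ> g1 \<in> comb k n" using comb_comp h(1) g1(1) by blast
    ultimately show "q \<in> A" using p0(2) by blast
  qed
  show False using sub1 sub2 nf by blast
qed



lemma choose:
  assumes k2: "2 \<le> k" and n: "3 \<le> n" and p: "p \<in> pos k n" and i0: "i0 < n" "dl k (p i0) = 0"
    and i1: "i1 < n" "i1 \<noteq> i0" "\<not> cen k (p i1)"
  shows "\<exists>a0 a1 a2. a0 < n \<and> a1 < n \<and> a2 < n \<and> a0 \<noteq> a1 \<and> a0 \<noteq> a2 \<and> a1 \<noteq> a2 \<and>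
     dl k (p a0) = 0 \<and> \<not> cen k (p a1) \<and>
     (cen k (p a2) \<or> dl k (p a1) = dl k (p a2) \<or> dl k (p a0) = dl k (p a1) \<or> chiral k n p)"
proof -
  have pk: "\<And>i. i < n \<Longrightarrow> p i < k" using p unfolding pos_def by auto
  have i0nc: "\<not> cen k (p i0)" using dl0_ncen[OF k2 pk[OF i0(1)] i0(2)] .
  show ?thesis
  proof (cases "\<exists>c<n. cen k (p c)")
    case True
    then obtain c where c: "c < n" "cen k (p c)" by blast
    have "c \<noteq> i0" "c \<noteq> i1" using c i0nc i1 by auto
    then show ?thesis using c i0 i1 by (intro exI[of _ i0] exI[of _ i1] exI[of _ c]) auto
  next
    case nC: False
    show ?thesis
    proof (cases "\<exists>a b. a < n \<and> b < n \<and> a \<noteq> b \<and> dl k (p a) = dl k (p b)")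
      case True
      then obtain a b where ab: "a < n" "b < n" "a \<noteq> b" "dl k (p a) = dl k (p b)" by blast
      show ?thesis
      proof (cases "i0 \<noteq> a \<and> i0 \<noteq> b")
        case True
        then show ?thesis using ab i0 nC by (intro exI[of _ i0] exI[of _ a] exI[of _ b]) auto
      next
        case False
        obtain c where c: "c < n" "c \<noteq> a" "c \<noteq> b" using third[OF n] by blast
        show ?thesis
        proof (cases "i0 = a")
          case True
          then show ?thesis using ab i0 nC c by (intro exI[of _ i0] exI[of _ b] exI[of _ c]) auto
        next
          case False
          then have "i0 = b" using \<open>\<not> (i0 \<noteq> a \<and> i0 \<noteq> b)\<close> by blast
          then show ?thesis using ab i0 nC c by (intro exI[of _ i0] exI[of _ a] exI[of _ c]) auto
        qed
      qed
    next
      case False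
      then have "inj_on (\<lambda>i. dl k (p i)) {..<n}" unfolding inj_on_def by auto
      then have ch: "chiral k n p" unfolding chiral_def using nC by blast
      obtain c where c: "c < n" "c \<noteq> i0" "c \<noteq> i1" using third[OF n] by blast
      then show ?thesis using i0 i1 ch by (intro exI[of _ i0] exI[of _ i1] exI[of _ c]) auto
    qed
  qed
qed

theorem mainTheorem6:
  fixes k n :: nat and A :: "(nat \<Rightarrow> nat) set" and p1 p2 p3 :: "nat \<Rightarrow> nat"
  assumes "k \<ge> 2" and "n \<ge> 3"
    and "conn_class k n A" and "A \<noteq> frame_class k n"
    and "p1 \<in> A" and "p2 \<in> A" and "p3 \<in> A"
    and "p1 \<noteq> p2" and "p1 \<noteq> p3" and "p2 \<noteq> p3"
  shows "\<exists>g \<in> comb k n. \<exists>I c.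
           I \<subseteq> {..<n} \<and> card I = 3 \<and> (\<forall>l<n. l \<notin> I \<longrightarrow> c l < k) \<and>
           (\<forall>q \<in> {p1, p2, p3}. \<forall>l<n. l \<notin> I \<longrightarrow> g q l = c l) \<and>
           (\<exists>B. conn_class k 3 B \<and> B \<noteq> frame_class k 3 \<and>
                restr I (g p1) \<in> B \<and> restr I (g p2) \<in> B \<and> restr I (g p3) \<in> B)"
proof -
  have k2: "2 \<le> k" and n3: "3 \<le> n" using assms(1,2) by auto
  obtain p0 where p0: "external k n p0" "A = {g p0 | g. g \<in> comb k n}"
    using assms(3) unfolding conn_class_def by blast
  have p0p: "p0 \<in> pos k n" using p0(1) unfolding external_def by blast
  obtain h1 where h1: "h1 \<in> comb k n" "p1 = h1 p0" using assms(5) p0(2) by blast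
  obtain h2 where h2: "h2 \<in> comb k n" "p2 = h2 p0" using assms(6) p0(2) by blast
  obtain h3 where h3: "h3 \<in> comb k n" "p3 = h3 p0" using assms(7) p0(2) by blast
  have p1p: "p1 \<in> pos k n" using h1 comb_pos p0p by blast
  have p2p: "p2 \<in> pos k n" using h2 comb_pos p0p by blast
  have p3p: "p3 \<in> pos k n" using h3 comb_pos p0p by blast
  have ms1: "MS k n p1 = MS k n p0" using h1 MS_comb p0p by blast
  have ms2: "MS k n p2 = MS k n p0" using h2 MS_comb p0p by blast
  have ms3': "MS k n p3 = MS k n p0" using h3 MS_comb p0p by blast
  obtain e where e: "e < n" "p0 e = 0 \<or> p0 e = k - 1" using p0(1) unfolding external_def by blast
  have "dl k (p0 e) = 0" using e(2) by auto
  then have "0 \<in> set (map (\<lambda>i. dl k (p0 i)) [0..<n])" using e(1) by force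
  then have "0 \<in> set (map (\<lambda>i. dl k (p1 i)) [0..<n])" using ms1 mset_eq_setD unfolding MS_def by metis
  then obtain i0 where i0: "i0 < n" "dl k (p1 i0) = 0" by auto
  obtain i1 where i1: "i1 < n" "i1 \<noteq> i0" "\<not> cen k (p1 i1)"
    using not_frame[OF k2 n3 assms(3,4,5) i0] by blast
  obtain a0 a1 a2 where a: "a0 < n" "a1 < n" "a2 < n" "a0 \<noteq> a1" "a0 \<noteq> a2" "a1 \<noteq> a2"
     "dl k (p1 a0) = 0" "\<not> cen k (p1 a1)"
     "cen k (p1 a2) \<or> dl k (p1 a1) = dl k (p1 a2) \<or> dl k (p1 a0) = dl k (p1 a1) \<or> chiral k n p1"
    using choose[OF k2 n3 p1p i0 i1] by blast
  obtain X where X: "reach k n p1 X" "dl k (X 0) = dl k (p1 a0)" "dl k (X 1) = dl k (p1 a1)" "dl k (X 2) = dl k (p1 a2)"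
    using phase1[OF p1p n3 a(1-6)] by blast
  have Xp: "X \<in> pos k n" using reach_pos X(1) p1p by blast
  have Xk: "X 0 < k" "X 1 < k" "X 2 < k" "p1 a1 < k" "p1 a2 < k" using Xp p1p a n3 unfolding pos_def by auto
  have X0: "dl k (X 0) = 0" using X(2) a(7) by simp
  have X1: "\<not> cen k (X 1)" using X(3) a(8) cen_dl Xk by metis
  have X2: "cen k (X 2) \<longleftrightarrow> cen k (p1 a2)" using X(4) cen_dl Xk by metis
  obtain g1 where g1: "g1 \<in> comb k n" "g1 p1 = X" using X(1) unfolding reach_def by blast
  have msX: "MS k n X = MS k n p0" using MS_comb[OF g1(1) p1p] g1(2) ms1 by simp
  define q2 where "q2 = g1 p2"
  have q2p: "q2 \<in> pos k n" unfolding q2_def using comb_pos g1(1) p2p by blast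
  have msq2: "MS k n q2 = MS k n X" unfolding q2_def using MS_comb[OF g1(1) p2p] ms2 msX by simp
  obtain Y where Y: "sreach k n X X q2 Y" "\<forall>j. 3 \<le> j \<and> j < n \<longrightarrow> Y j = X j"
    using tail[OF k2 n3 Xp X0 X1 Xp Xp _ q2p msq2] by blast
  obtain g2 where g2: "g2 \<in> comb k n" "g2 q2 = Y" "g2 X = X" using Y(1) unfolding sreach_def by blast
  have Yp: "Y \<in> pos k n" using g2 comb_pos q2p by metis
  define q3 where "q3 = g2 (g1 p3)"
  have q3p: "q3 \<in> pos k n" unfolding q3_def using comb_pos g1(1) g2(1) p3p by blast
  have msq3: "MS k n q3 = MS k n X" unfolding q3_def
    using MS_comb[OF g1(1) p3p] MS_comb[OF g2(1) comb_pos[OF g1(1) p3p]] ms3' msX by simp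
  obtain Z where Z: "sreach k n X Y q3 Z" "\<forall>j. 3 \<le> j \<and> j < n \<longrightarrow> Z j = X j"
    using tail[OF k2 n3 Xp X0 X1 Xp Yp _ q3p msq3] Y(2) by blast
  obtain g3 where g3: "g3 \<in> comb k n" "g3 q3 = Z" "g3 X = X" "g3 Y = Y" using Z(1) unfolding sreach_def by blast
  have Zp: "Z \<in> pos k n" using g3 comb_pos q3p by metis
  define g where "g = g3 \<circ> g2 \<circ> g1"
  have gc: "g \<in> comb k n" unfolding g_def using comb_comp g1(1) g2(1) g3(1) by blast
  have gp1: "g p1 = X" unfolding g_def using g1 g2 g3 by simp
  have gp2: "g p2 = Y" unfolding g_def using g2 g3 q2_def by simp
  have gp3: "g p3 = Z" unfolding g_def using g3 q3_def by simp
  have msY: "MS k n Y = MS k n X" using MS_comb[OF g2(1) q2p] g2(2) msq2 by simp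
  have msZ: "MS k n Z = MS k n X" using MS_comb[OF g3(1) q3p] g3(2) msq3 by simp
  have chX: "chiral k n p1 \<Longrightarrow> chiral k n X \<and> chir k n X = chir k n p0"
  proof -
    assume c: "chiral k n p1"
    have c0: "chiral k n p0" using chiral_MS[OF ms1 p1p p0p c] .
    have "X = (g1 \<circ> h1) p0" using g1 h1 by simp
    moreover have "g1 \<circ> h1 \<in> comb k n" using comb_comp g1(1) h1(1) by blast
    ultimately show ?thesis using chir_comb c0 p0p by metis
  qed
  have chY: "chiral k n p1 \<Longrightarrow> chir k n Y = chir k n p0"
  proof -
    assume c: "chiral k n p1"
    have c0: "chiral k n p0" using chiral_MS[OF ms1 p1p p0p c] .
    have "Y = (g2 \<circ> g1 \<circ> h2) p0" using g1 g2 h2 q2_def by simp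
    moreover have "g2 \<circ> g1 \<circ> h2 \<in> comb k n" using comb_comp g1(1) g2(1) h2(1) by blast
    ultimately show ?thesis using chir_comb c0 p0p by metis
  qed
  have chZ: "chiral k n p1 \<Longrightarrow> chir k n Z = chir k n p0"
  proof -
    assume c: "chiral k n p1"
    have c0: "chiral k n p0" using chiral_MS[OF ms1 p1p p0p c] .
    have "Z = (g3 \<circ> g2 \<circ> g1 \<circ> h3) p0" using g1 g2 g3 h3 q3_def by simp
    moreover have "g3 \<circ> g2 \<circ> g1 \<circ> h3 \<in> comb k n" using comb_comp g1(1) g2(1) g3(1) h3(1) by blast
    ultimately show ?thesis using chir_comb c0 p0p by metis
  qed
  have strY: "cen k (X 2) \<or> dl k (X 1) = dl k (X 2) \<or> dl k (X 0) = dl k (X 1) \<or>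
              (chiral k n X \<and> chir k n Y = chir k n X)"
    using a(9) X X2 chX chY by auto
  have strZ: "cen k (X 2) \<or> dl k (X 1) = dl k (X 2) \<or> dl k (X 0) = dl k (X 1) \<or>
              (chiral k n X \<and> chir k n Z = chir k n X)"
    using a(9) X X2 chX chZ by auto
  have rY: "reach k 3 (restr {0,1,2} X) (restr {0,1,2} Y)" using final3[OF k2 n3 Xp Yp Y(2) msY strY] .
  have rZ: "reach k 3 (restr {0,1,2} X) (restr {0,1,2} Z)" using final3[OF k2 n3 Xp Zp Z(2) msZ strZ] .
  define B where "B = {h (restr {0,1,2} X) | h. h \<in> comb k 3}"
  have rXp: "restr {0,1,2} X \<in> pos k 3" using restr_pos[OF n3 Xp] .
  have rX0: "restr {0,1,2} X 0 = X 0" "restr {0,1,2} X 1 = X 1" unfolding restr012 by simp_all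
  have "X 0 = 0 \<or> X 0 = k - 1" using X0 dl0 Xk by blast
  then have "external k 3 (restr {0,1,2} X)" unfolding external_def using rXp rX0
    by (intro conjI exI[of _ 0]) auto
  then have cB: "conn_class k 3 B" unfolding conn_class_def B_def by blast
  have inB: "restr {0,1,2} X \<in> B" unfolding B_def
    by (intro CollectI exI[of _ id]) (simp add: comb.comb_id)
  have notF: "restr {0,1,2} X \<notin> frame_class k 3"
  proof
    assume f: "restr {0,1,2} X \<in> frame_class k 3"
    then have ok: "odd k" unfolding frame_class_def by (auto split: if_splits)
    then have "FR k 3 (restr {0,1,2} X)" using f frame_FR by blast
    then obtain i where i: "i < 3" "dl k (restr {0,1,2} X i) = 0" "\<forall>j<3. j \<noteq> i \<longrightarrow> cen k (restr {0,1,2} X j)"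
      unfolding FR_def by blast
    show False
    proof (cases "i = 1")
      case True
      have "(0::nat) < 3" by simp
      then have "cen k (X 0)" using i(3) rX0 True by (metis zero_neq_one)
      then show False using dl0_ncen[OF k2 Xk(1) X0] by blast
    next
      case False
      have "(1::nat) < 3" by simp
      then have "cen k (X 1)" using i(3) rX0 False by metis
      then show False using X1 by blast
    qed
  qed
  have BnF: "B \<noteq> frame_class k 3" using inB notF by blast
  have inBY: "restr {0,1,2} Y \<in> B"
  proof -
    obtain h where "h \<in> comb k 3" "h (restr {0,1,2} X) = restr {0,1,2} Y" using rY unfolding reach_def by blast
    then show ?thesis unfolding B_def by (intro CollectI exI[of _ h]) auto
  qed
  have inBZ: "restr {0,1,2} Z \<in> B"
  proof -
    obtain h where "h \<in> comb k 3" "h (restr {0,1,2} X) = restr {0,1,2} Z" using rZ unfolding reach_def by blast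
    then show ?thesis unfolding B_def by (intro CollectI exI[of _ h]) auto
  qed
  have I: "{0,1,2} \<subseteq> {..<n}" "card {0,1,2::nat} = 3" using n3 by auto
  have cX: "\<forall>l<n. l \<notin> {0,1,2} \<longrightarrow> X l < k" using Xp unfolding pos_def by auto
  have ag: "\<forall>q \<in> {p1, p2, p3}. \<forall>l<n. l \<notin> {0,1,2} \<longrightarrow> g q l = X l"
  proof -
    have "\<And>l. l \<notin> {0,1,2::nat} \<Longrightarrow> 3 \<le> l" by auto
    then show ?thesis using gp1 gp2 gp3 Y(2) Z(2) by auto
  qed
  show ?thesis
    using gc I cX ag cB BnF inB inBY inBZ gp1 gp2 gp3
    by (intro bexI[of _ g] exI[of _ "{0,1,2}"] exI[of _ X]) auto
qed


end
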